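(* For every $n\in\mathbb N$, the tuple $(\mathbb{T}_{n+1}^-,\iota^n,\kappa^n)$ is a Kruskal derivative of the normal PO-dilator $M\circ\mathbb{T}_n$, where $\iota^n_X:X\to\mathbb{T}_{n+1}^-(X)$ is $\iota^n_X(x)=\overline x$ and $\kappa^n_X:M(\mathbb{T}_n(\mathbb{T}_{n+1}^-(X)))\to\mathbb{T}_{n+1}^-(X)$ is $\kappa^n_X([s_0,\dots,s_{m-1}])=0\star[\pi^n_X(s_0),\dots,\pi^n_X(s_{m-1})]$.
   Context: A quasi embedding between partial orders $X,Y$ is a function $f$ with $f(x)\leq_Y f(y)\Rightarrow x\leq_X y$; an embedding also satisfies the converse. $\mathrm{PO}$ is the category of partial orders and quasi embeddings. $[X]^{<\omega}$ denotes finite subsets, $[f]^{<\omega}(a)=\{f(x)\mid x\in a\}$. A PO-dilator is a functor $W:\mathrm{PO}\to\mathrm{PO}$ mapping embeddings to embeddings, with a natural transformation $\operatorname{supp}^W:W\Rightarrow[\cdot]^{<\omega}$ such that for every embedding $f:X\to Y$, $\operatorname{rng}(W(f))=\{\sigma\in W(Y)\mid\operatorname{supp}^W_Y(\sigma)\subseteq\operatorname{rng}(f)\}$. For finite $a,b\subseteq X$, $a\leq^{\mathrm{fin}}_X b$ iff every $x\in a$ has some $y\in b$ with $x\leq_X y$ ($z\leq^{\mathrm{fin}}_X b$ means $\{z\}\leq^{\mathrm{fin}}_X b$). $W$ is normal if $\sigma\leq_{W(X)}\tau$ implies $\operatorname{supp}^W_X(\sigma)\leq^{\mathrm{fin}}_X\operatorname{supp}^W_X(\tau)$.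 The composition $V\circ W$ of PO-dilators is the composite functor with $\operatorname{supp}^{V\circ W}_X(\sigma)=\bigcup\{\operatorname{supp}^W_X(s)\mid s\in\operatorname{supp}^V_{W(X)}(\sigma)\}$. A Kruskal fixed point of $W$ over $X$ is a partial order $Z$ with $\iota:X\to Z$, $\kappa:W(Z)\to Z$ such that $\operatorname{rng}(\iota)\cap\operatorname{rng}(\kappa)=\emptyset$ and, for all $x,y\in X$, $\sigma,\tau\in W(Z)$: $\iota(x)\leq_Z\iota(y)\Rightarrow x\leq_X y$; $\iota(x)\leq_Z\kappa(\tau)$ iff $\iota(x)\leq^{\mathrm{fin}}_Z\operatorname{supp}^W_Z(\tau)$; $\kappa(\sigma)\not\leq_Z\iota(y)$; $\kappa(\sigma)\leq_Z\kappa(\tau)$ iff ($\sigma\leq_{W(Z)}\tau$ or $\kappa(\sigma)\leq^{\mathrm{fin}}_Z\operatorname{supp}^W_Z(\tau)$). It is initial if for every Kruskal fixed point $(Z',\iota',\kappa')$ of $W$ over $X$ there is a unique quasi embedding $f:Z\to Z'$ with $f\circ\iota=\iota'$ and $f\circ\kappa=\kappa'\circ W(f)$. A Kruskal derivative of a normal PO-dilator $W$ is a tuple $(\mathcal T W,\iota,\kappa)$ with $\mathcal T W$ a normal PO-dilator and families $\iota_X:X\to\mathcal T W(X)$, $\kappa_X:W(\mathcal T W(X))\to\mathcal T W(X)$ such that (i) each $(\mathcal T W(X),\iota_X,\kappa_X)$ is an initial Kruskal fixed point of $W$ over $X$, and (ii) $\iota_Y\circ f=\mathcal T W(f)\circ\iota_X$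 and $\mathcal T W(f)\circ\kappa_X=\kappa_Y\circ W(\mathcal T W(f))$ for every quasi embedding $f:X\to Y$. $M$ is the multiset dilator: $M(X)$ is the set of finite multisets $[x_0,\dots,x_{m-1}]$ over $X$, with $[x_0,\dots,x_{m-1}]\leq_{M(X)}[y_0,\dots,y_{k-1}]$ iff there is an injection $g$ with $x_i\leq_X y_{g(i)}$ for all $i<m$, $M(f)([x_0,\dots])=[f(x_0),\dots]$, $\operatorname{supp}^M_X([x_0,\dots,x_{m-1}])=\{x_0,\dots,x_{m-1}\}$. For $n\in\mathbb N$ and a partial order $X$, $\mathbb{T}_n(X)$ is generated by $\overline x$ ($x\in X$) and $i\star\sigma$ ($\sigma\in M(\mathbb{T}_n(X))$, $i<n$); $\mathbb{T}_n^-(X)=\{\overline x\mid x\in X\}\cup\{0\star\sigma\mid\sigma\in M(\mathbb{T}_n(X))\}$ for $n>0$. The partial order $\leq_{\mathbb{T}_n(X)}$: $\overline x\leq t$ iff either $t=\overline y$ with $x\leq_X y$, or $t=j\star[t_0,\dots,t_{m-1}]$ and $\overline x\leq t_l$ for some $l$; $i\star\sigma\leq t$ iff either $t=i\star\tau$ with $\sigma\leq_{M(\mathbb{T}_n(X))}\tau$, or $t=j\star[t_0,\dots,t_{m-1}]$ with $j\geq i$ and $i\star\sigma\leq t_l$ for some $l$; $\mathbb{T}_n^-(X)$ carries the restricted order. $\mathbb{T}_n(f)(\overline x)=\overline{f(x)}$, $\mathbb{T}_n(f)(i\star[t_0,\dots])=i\star[\mathbb{T}_n(f)(t_0),\dots]$,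 $\mathbb{T}_n^-(f)$ its restriction; $\operatorname{supp}^{\mathbb{T}_n}_X(\overline x)=\{x\}$, $\operatorname{supp}^{\mathbb{T}_n}_X(i\star[t_0,\dots,t_{m-1}])=\bigcup_l\operatorname{supp}^{\mathbb{T}_n}_X(t_l)$, and $\operatorname{supp}^{\mathbb{T}_n^-}_X$ its restriction. With these, $\mathbb{T}_n$ and $\mathbb{T}_{n+1}^-$ are normal PO-dilators. $\pi^n_X:\mathbb{T}_n(\mathbb{T}_{n+1}^-(X))\to\mathbb{T}_{n+1}(X)$ is defined by $\pi^n_X(\overline t)=t$ and $\pi^n_X(i\star[s_0,\dots,s_{m-1}])=(i+1)\star[\pi^n_X(s_0),\dots,\pi^n_X(s_{m-1})]$. *)

theory Defs
  imports "HOL-Library.Multiset"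
begin

text \<open>A partial order is represented by its carrier set together with a relation
  (only the relation on the carrier is relevant).\<close>

type_synonym 'a po = "'a set \<times> ('a \<Rightarrow> 'a \<Rightarrow> bool)"

definition car :: "'a po \<Rightarrow> 'a set" where "car X = fst X"
definition leq :: "'a po \<Rightarrow> 'a \<Rightarrow> 'a \<Rightarrow> bool" where "leq X = snd X"

definition is_po :: "'a po \<Rightarrow> bool" where
  "is_po X \<longleftrightarrow>
     (\<forall>x\<in>car X. leq X x x) \<and>
     (\<forall>x\<in>car X. \<forall>y\<in>car X. leq X x y \<and> leq X y x \<longrightarrow> x = y) \<and>
     (\<forall>x\<in>car X. \<forall>y\<in>car X. \<forall>z\<in>car X. leq X x y \<and> leq X y z \<longrightarrow> leq X x z)"

definition qemb :: "('a \<Rightarrow> 'b) \<Rightarrow> 'a po \<Rightarrow> 'b po \<Rightarrow> bool" where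
  "qemb f X Y \<longleftrightarrow> (\<forall>x\<in>car X. f x \<in> car Y) \<and>
     (\<forall>x\<in>car X. \<forall>y\<in>car X. leq Y (f x) (f y) \<longrightarrow> leq X x y)"

definition emb :: "('a \<Rightarrow> 'b) \<Rightarrow> 'a po \<Rightarrow> 'b po \<Rightarrow> bool" where
  "emb f X Y \<longleftrightarrow> qemb f X Y \<and> (\<forall>x\<in>car X. \<forall>y\<in>car X. leq X x y \<longrightarrow> leq Y (f x) (f y))"

definition fin_le :: "('a \<Rightarrow> 'a \<Rightarrow> bool) \<Rightarrow> 'a set \<Rightarrow> 'a set \<Rightarrow> bool" where
  "fin_le le a b \<longleftrightarrow> (\<forall>x\<in>a. \<exists>y\<in>b. le x y)"

text \<open>Since the types change, the
  predicate takes separate type instances of the constituents; in the main theorem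
  they are instantiated with the same polymorphic constants at arbitrary types.
  \<open>Mid\<close>: action on maps of type a to a; \<open>Mab\<close>, \<open>Mbc\<close>, \<open>Mac\<close>: actions on maps
  between the indicated types.\<close>

definition po_dilator ::
  "('a po \<Rightarrow> 'u po) \<Rightarrow> ('a po \<Rightarrow> 'u \<Rightarrow> 'a set) \<Rightarrow>
   ('b po \<Rightarrow> 'v po) \<Rightarrow> ('b po \<Rightarrow> 'v \<Rightarrow> 'b set) \<Rightarrow>
   (('a \<Rightarrow> 'a) \<Rightarrow> 'u \<Rightarrow> 'u) \<Rightarrow> (('a \<Rightarrow> 'b) \<Rightarrow> 'u \<Rightarrow> 'v) \<Rightarrow>
   (('b \<Rightarrow> 'c) \<Rightarrow> 'v \<Rightarrow> 'w) \<Rightarrow> (('a \<Rightarrow> 'c) \<Rightarrow> 'u \<Rightarrow> 'w) \<Rightarrow> bool" where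
  "po_dilator Wa Sa Wb Sb Mid Mab Mbc Mac \<longleftrightarrow>
     \<comment> \<open>objects are mapped to partial orders; supports are finite subsets\<close>
     (\<forall>X. is_po X \<longrightarrow> is_po (Wa X) \<and>
        (\<forall>\<sigma>\<in>car (Wa X). finite (Sa X \<sigma>) \<and> Sa X \<sigma> \<subseteq> car X)) \<and>
     \<comment> \<open>functoriality: identities\<close>
     (\<forall>X f. is_po X \<and> (\<forall>x\<in>car X. f x = x) \<longrightarrow> (\<forall>\<sigma>\<in>car (Wa X). Mid f \<sigma> = \<sigma>)) \<and>
     \<comment> \<open>well-definedness on morphisms (maps agreeing on the carrier)\<close>
     (\<forall>X Y f g. is_po X \<and> is_po Y \<and> qemb f X Y \<and> (\<forall>x\<in>car X. f x = g x) \<longrightarrow>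
        (\<forall>\<sigma>\<in>car (Wa X). Mab f \<sigma> = Mab g \<sigma>)) \<and>
     \<comment> \<open>functoriality: composition\<close>
     (\<forall>X Y Z f g. is_po X \<and> is_po Y \<and> is_po Z \<and> qemb f X Y \<and> qemb g Y Z \<longrightarrow>
        (\<forall>\<sigma>\<in>car (Wa X). Mac (g \<circ> f) \<sigma> = Mbc g (Mab f \<sigma>))) \<and>
     \<comment> \<open>morphisms, naturality of supports, embeddings, support condition\<close>
     (\<forall>X Y f. is_po X \<and> is_po Y \<and> qemb f X Y \<longrightarrow>
        qemb (Mab f) (Wa X) (Wb Y) \<and>
        (\<forall>\<sigma>\<in>car (Wa X). Sb Y (Mab f \<sigma>) = f ` Sa X \<sigma>) \<and>
        (emb f X Y \<longrightarrow> emb (Mab f) (Wa X) (Wb Y) \<and>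
           Mab f ` car (Wa X) = {\<sigma>\<in>car (Wb Y). Sb Y \<sigma> \<subseteq> f ` car X}))"

definition normal :: "('a po \<Rightarrow> 'u po) \<Rightarrow> ('a po \<Rightarrow> 'u \<Rightarrow> 'a set) \<Rightarrow> bool" where
  "normal Wo Ws \<longleftrightarrow> (\<forall>X. is_po X \<longrightarrow>
     (\<forall>\<sigma>\<in>car (Wo X). \<forall>\<tau>\<in>car (Wo X).
        leq (Wo X) \<sigma> \<tau> \<longrightarrow> fin_le (leq X) (Ws X \<sigma>) (Ws X \<tau>)))"

definition comp_obj :: "('b po \<Rightarrow> 'c po) \<Rightarrow> ('a po \<Rightarrow> 'b po) \<Rightarrow> 'a po \<Rightarrow> 'c po" where
  "comp_obj Vo Wo X = Vo (Wo X)"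

definition comp_supp ::
  "('b po \<Rightarrow> 'c \<Rightarrow> 'b set) \<Rightarrow> ('a po \<Rightarrow> 'b po) \<Rightarrow> ('a po \<Rightarrow> 'b \<Rightarrow> 'a set) \<Rightarrow> 'a po \<Rightarrow> 'c \<Rightarrow> 'a set" where
  "comp_supp Vs Wo Ws X \<sigma> = \<Union> {Ws X s | s. s \<in> Vs (Wo X) \<sigma>}"


definition kfp ::
  "('z po \<Rightarrow> 'w po) \<Rightarrow> ('z po \<Rightarrow> 'w \<Rightarrow> 'z set) \<Rightarrow> 'a po \<Rightarrow> 'z po \<Rightarrow> ('a \<Rightarrow> 'z) \<Rightarrow> ('w \<Rightarrow> 'z) \<Rightarrow> bool" where
  "kfp Wo Ws X Z \<iota> \<kappa> \<longleftrightarrow>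
     is_po Z \<and> (\<forall>x\<in>car X. \<iota> x \<in> car Z) \<and> (\<forall>\<sigma>\<in>car (Wo Z). \<kappa> \<sigma> \<in> car Z) \<and>
     \<iota> ` car X \<inter> \<kappa> ` car (Wo Z) = {} \<and>
     (\<forall>x\<in>car X. \<forall>y\<in>car X. leq Z (\<iota> x) (\<iota> y) \<longrightarrow> leq X x y) \<and>
     (\<forall>x\<in>car X. \<forall>\<tau>\<in>car (Wo Z). leq Z (\<iota> x) (\<kappa> \<tau>) \<longleftrightarrow> fin_le (leq Z) {\<iota> x} (Ws Z \<tau>)) \<and>
     (\<forall>\<sigma>\<in>car (Wo Z). \<forall>y\<in>car X. \<not> leq Z (\<kappa> \<sigma>) (\<iota> y)) \<and>
     (\<forall>\<sigma>\<in>car (Wo Z). \<forall>\<tau>\<in>car (Wo Z). leq Z (\<kappa> \<sigma>) (\<kappa> \<tau>) \<longleftrightarrow>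
        (leq (Wo Z) \<sigma> \<tau> \<or> fin_le (leq Z) {\<kappa> \<sigma>} (Ws Z \<tau>)))"

text \<open>Initiality: the competing fixed points range over partial orders on an arbitrary
  type \<open>'y\<close> (universally quantified at the level of the theorem).\<close>
definition initial_kfp ::
  "('z po \<Rightarrow> 'w po) \<Rightarrow> ('z po \<Rightarrow> 'w \<Rightarrow> 'z set) \<Rightarrow>
   ('y po \<Rightarrow> 'v po) \<Rightarrow> ('y po \<Rightarrow> 'v \<Rightarrow> 'y set) \<Rightarrow> (('z \<Rightarrow> 'y) \<Rightarrow> 'w \<Rightarrow> 'v) \<Rightarrow>
   'a po \<Rightarrow> 'z po \<Rightarrow> ('a \<Rightarrow> 'z) \<Rightarrow> ('w \<Rightarrow> 'z) \<Rightarrow> bool" where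
  "initial_kfp Wo Ws Wo' Ws' Wm X Z \<iota> \<kappa> \<longleftrightarrow>
     kfp Wo Ws X Z \<iota> \<kappa> \<and>
     (\<forall>Z' \<iota>' \<kappa>'. kfp Wo' Ws' X Z' \<iota>' \<kappa>' \<longrightarrow>
        (\<exists>f. qemb f Z Z' \<and> (\<forall>x\<in>car X. f (\<iota> x) = \<iota>' x) \<and>
             (\<forall>\<sigma>\<in>car (Wo Z). f (\<kappa> \<sigma>) = \<kappa>' (Wm f \<sigma>)) \<and>
             (\<forall>g. qemb g Z Z' \<and> (\<forall>x\<in>car X. g (\<iota> x) = \<iota>' x) \<and>
                  (\<forall>\<sigma>\<in>car (Wo Z). g (\<kappa> \<sigma>) = \<kappa>' (Wm g \<sigma>)) \<longrightarrow>
                  (\<forall>z\<in>car Z. g z = f z))))"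

definition mle :: "('a \<Rightarrow> 'a \<Rightarrow> bool) \<Rightarrow> 'a multiset \<Rightarrow> 'a multiset \<Rightarrow> bool" where
  "mle R M N \<longleftrightarrow> (\<exists>xs ys g. mset xs = M \<and> mset ys = N \<and> inj_on g {..<length xs} \<and>
      (\<forall>i<length xs. g i < length ys \<and> R (xs ! i) (ys ! g i)))"

lemma mle_mono [mono]: "R \<le> S \<Longrightarrow> mle R \<le> mle S"
  unfolding mle_def le_fun_def le_bool_def by blast

definition MO :: "'a po \<Rightarrow> 'a multiset po" where
  "MO X = ({\<sigma>. set_mset \<sigma> \<subseteq> car X}, mle (leq X))"

definition MS :: "'a po \<Rightarrow> 'a multiset \<Rightarrow> 'a set" where
  "MS X \<sigma> = set_mset \<sigma>"

definition MM :: "('a \<Rightarrow> 'b) \<Rightarrow> 'a multiset \<Rightarrow> 'b multiset" where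
  "MM f \<sigma> = image_mset f \<sigma>"

text \<open>\<open>Bar x\<close> is \<open>x\<close> with an overline, \<open>Star i \<sigma>\<close> is \<open>i \<star> \<sigma>\<close>.\<close>
datatype 'a ktree = Bar 'a | Star nat "'a ktree multiset"

inductive_set tcar :: "nat \<Rightarrow> 'a set \<Rightarrow> 'a ktree set" for n :: nat and A :: "'a set" where
  bar: "x \<in> A \<Longrightarrow> Bar x \<in> tcar n A"
| star: "i < n \<Longrightarrow> (\<forall>t\<in>#\<sigma>. t \<in> tcar n A) \<Longrightarrow> Star i \<sigma> \<in> tcar n A"

inductive tle :: "('a \<Rightarrow> 'a \<Rightarrow> bool) \<Rightarrow> 'a ktree \<Rightarrow> 'a ktree \<Rightarrow> bool" for le where
  bar_bar: "le x y \<Longrightarrow> tle le (Bar x) (Bar y)"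
| bar_star: "t \<in># ts \<Longrightarrow> tle le (Bar x) t \<Longrightarrow> tle le (Bar x) (Star j ts)"
| star_star: "mle (tle le) \<sigma> \<tau> \<Longrightarrow> tle le (Star i \<sigma>) (Star i \<tau>)"
| star_below: "i \<le> j \<Longrightarrow> t \<in># ts \<Longrightarrow> tle le (Star i \<sigma>) t \<Longrightarrow> tle le (Star i \<sigma>) (Star j ts)"

definition TO :: "nat \<Rightarrow> 'a po \<Rightarrow> 'a ktree po" where
  "TO n X = (tcar n (car X), tle (leq X))"

definition TS :: "'a po \<Rightarrow> 'a ktree \<Rightarrow> 'a set" where
  "TS X t = set_ktree t"

text \<open>\<open>T_n^-(X)\<close> (used for \<open>n > 0\<close>), with the restricted order and support.\<close>
definition TmO :: "nat \<Rightarrow> 'a po \<Rightarrow> 'a ktree po" where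
  "TmO n X = ({Bar x | x. x \<in> car X} \<union> {Star 0 \<sigma> | \<sigma>. Star 0 \<sigma> \<in> tcar n (car X)}, tle (leq X))"

definition TmS :: "'a po \<Rightarrow> 'a ktree \<Rightarrow> 'a set" where
  "TmS X t = set_ktree t"

definition WO :: "nat \<Rightarrow> 'a po \<Rightarrow> 'a ktree multiset po" where
  "WO n = comp_obj MO (TO n)"

definition WS :: "nat \<Rightarrow> 'a po \<Rightarrow> 'a ktree multiset \<Rightarrow> 'a set" where
  "WS n = comp_supp MS (TO n) TS"

definition WM :: "('a \<Rightarrow> 'b) \<Rightarrow> 'a ktree multiset \<Rightarrow> 'b ktree multiset" where
  "WM f = MM (map_ktree f)"

text \<open>\<open>\<pi>^n_X : T_n(T_{n+1}^-(X)) \<rightarrow> T_{n+1}(X)\<close>.\<close>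
primrec pi :: "'a ktree ktree \<Rightarrow> 'a ktree" where
  "pi (Bar t) = t"
| "pi (Star i \<sigma>) = Star (Suc i) (image_mset pi \<sigma>)"

definition iota :: "'a \<Rightarrow> 'a ktree" where "iota x = Bar x"

definition kappa :: "'a ktree ktree multiset \<Rightarrow> 'a ktree" where
  "kappa \<sigma> = Star 0 (image_mset pi \<sigma>)"

end

theory Submission
  imports Defs
begin


inductive mi :: "('a \<Rightarrow> 'b \<Rightarrow> bool) \<Rightarrow> 'a multiset \<Rightarrow> 'b multiset \<Rightarrow> bool" for R where
  mi_empty: "mi R {#} N"
| mi_add: "R a b \<Longrightarrow> mi R M N \<Longrightarrow> mi R (add_mset a M) (add_mset b N)"

lemma mi_sub: "mi R M N \<Longrightarrow> N \<subseteq># N' \<Longrightarrow> mi R M N'"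
proof (induction arbitrary: N' rule: mi.induct)
  case (mi_empty N)
  show ?case by (rule mi.mi_empty)
next
  case (mi_add a b M N)
  then have "b \<in># N'" by (meson insert_subset_eq_iff)
  then obtain N'' where N'': "N' = add_mset b N''" by (metis multi_member_split)
  with mi_add have "N \<subseteq># N''" by simp
  with mi_add N'' show ?case by (simp add: mi.mi_add)
qed

lemma mi_list: "length xs = length ys \<Longrightarrow> (\<forall>i<length xs. R (xs!i) (ys!i)) \<Longrightarrow> mi R (mset xs) (mset ys)"
proof (induction xs arbitrary: ys)
  case Nil then show ?case by (simp add: mi_empty)
next
  case (Cons x xs)
  then obtain y ys' where ys: "ys = y # ys'" by (cases ys) auto
  from Cons ys have "R x y" by force
  moreover from Cons ys have "mi R (mset xs) (mset ys')" by force
  ultimately show ?case using ys by (simp add: mi_add)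
qed

lemma distinct_sub_mset: "distinct is \<Longrightarrow> set is \<subseteq> {..<length ys} \<Longrightarrow> mset (map (nth ys) is) \<subseteq># mset ys"
proof -
  assume d: "distinct is" and s: "set is \<subseteq> {..<length ys}"
  have "mset is = mset_set (set is)" using d by (simp add: mset_set_set)
  also have "\<dots> \<subseteq># mset_set {..<length ys}" using s by (simp add: subset_imp_msubset_mset_set)
  also have "\<dots> = mset [0..<length ys]" by (metis atLeast_upt distinct_upt mset_set_set)
  finally have "image_mset (nth ys) (mset is) \<subseteq># image_mset (nth ys) (mset [0..<length ys])"
    by (rule image_mset_subseteq_mono)
  then show ?thesis by (metis map_nth mset_map)
qed

lemma mle_mi: "mle R M N \<longleftrightarrow> mi R M N"
proof
  assume "mle R M N"
  then obtain xs ys g where xs: "mset xs = M" and ys: "mset ys = N" and inj: "inj_on g {..<length xs}"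
    and h: "\<forall>i<length xs. g i < length ys \<and> R (xs ! i) (ys ! g i)" unfolding mle_def by blast
  let ?is = "map g [0..<length xs]"
  have "mi R (mset xs) (mset (map (nth ys) ?is))"
    by (rule mi_list) (use h in auto)
  moreover have "mset (map (nth ys) ?is) \<subseteq># mset ys"
    apply (rule distinct_sub_mset)
    using inj h by (auto simp: distinct_map atLeast_upt)
  ultimately show "mi R M N" using xs ys mi_sub by blast
next
  assume "mi R M N"
  then show "mle R M N"
  proof (induction rule: mi.induct)
    case (mi_empty N)
    obtain ys where "mset ys = N" using ex_mset by blast
    then show ?case unfolding mle_def
      by (intro exI[of _ "[]"] exI[of _ ys]) simp
  next
    case (mi_add a b M N)
    then obtain xs ys g where xs: "mset xs = M" and ys: "mset ys = N" and inj: "inj_on g {..<length xs}"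
      and h: "\<forall>i<length xs. g i < length ys \<and> R (xs ! i) (ys ! g i)" unfolding mle_def by blast
    define g' where "g' i = (if i = 0 then 0 else Suc (g (i - 1)))" for i
    have "inj_on g' {..<length (a # xs)}"
    proof (rule inj_onI)
      fix i j assume i: "i \<in> {..<length (a # xs)}" and j: "j \<in> {..<length (a # xs)}" and e: "g' i = g' j"
      show "i = j"
      proof (cases "i = 0 \<or> j = 0")
        case True then show ?thesis using e by (auto simp: g'_def split: if_splits)
      next
        case False
        then have "g (i - 1) = g (j - 1)" using e by (simp add: g'_def)
        moreover have "i - 1 \<in> {..<length xs}" "j - 1 \<in> {..<length xs}" using i j False by auto
        ultimately have "i - 1 = j - 1" using inj by (meson inj_onD)
        then show ?thesis using False by arith
      qed
    qed
    moreover have "\<forall>i<length (a#xs). g' i < length (b#ys) \<and> R ((a#xs) ! i) ((b#ys) ! g' i)"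
      using h mi_add(1) by (auto simp: g'_def nth_Cons')
    ultimately show ?case unfolding mle_def using xs ys
      by (intro exI[of _ "a#xs"] exI[of _ "b#ys"] exI[of _ g']) auto
  qed
qed

lemma mi_invL: "mi R (add_mset a M) N \<Longrightarrow> \<exists>b N'. N = add_mset b N' \<and> R a b \<and> mi R M N'"
proof (induction "add_mset a M" N arbitrary: a M rule: mi.induct)
  case (mi_empty N)
  then show ?case by simp
next
  case (mi_add a' b M' N)
  show ?case
  proof (cases "a' = a")
    case True
    then have "M' = M" using mi_add by simp
    then show ?thesis using mi_add True by blast
  next
    case False
    then have "a \<in># M'" using mi_add by (metis insert_noteq_member)
    then obtain M'' where M'': "M' = add_mset a M''" by (metis multi_member_split)
    then have M: "M = add_mset a' M''" using mi_add False by (metis add_mset_commute add_mset_remove_trivial)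
    from mi_add.hyps(3)[OF M''] obtain b' N' where "N = add_mset b' N'" "R a b'" "mi R M'' N'" by blast
    then show ?thesis using M mi_add.hyps(1)
      by (intro exI[of _ b'] exI[of _ "add_mset b N'"]) (auto simp: add_mset_commute intro: mi.mi_add)
  qed
qed

lemma mi_nil_right0: "mi R M N \<Longrightarrow> N = {#} \<Longrightarrow> M = {#}"
  by (induction rule: mi.induct) auto

lemma mi_nil_right: "mi R M {#} \<Longrightarrow> M = {#}"
  using mi_nil_right0 by blast

lemma mi_elem: "mi R M N \<Longrightarrow> a \<in># M \<Longrightarrow> \<exists>b\<in>#N. R a b"
  by (induction rule: mi.induct) auto

lemma mi_refl: "(\<forall>x\<in>#M. R x x) \<Longrightarrow> mi R M M"
  by (induction M) (auto intro: mi.intros)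

lemma mi_mono: "mi R M N \<Longrightarrow> (\<forall>a\<in>#M. \<forall>b\<in>#N. R a b \<longrightarrow> S a b) \<Longrightarrow> mi S M N"
  by (induction rule: mi.induct) (auto intro: mi.intros)

lemma mi_trans: "mi R A B \<Longrightarrow> mi S B C \<Longrightarrow> (\<forall>a\<in>#A. \<forall>b\<in>#B. \<forall>c\<in>#C. R a b \<longrightarrow> S b c \<longrightarrow> T a c) \<Longrightarrow> mi T A C"
proof (induction arbitrary: C rule: mi.induct)
  case (mi_empty N)
  then show ?case by (simp add: mi.mi_empty)
next
  case (mi_add a b M N)
  from mi_invL[OF mi_add(4)] obtain c C' where C: "C = add_mset c C'" "S b c" "mi S N C'" by blast
  have "T a c" using mi_add C by auto
  moreover have "mi T M C'" using mi_add.IH[OF C(3)] mi_add(5) C(1) by auto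
  ultimately show ?case using C(1) by (simp add: mi.mi_add)
qed

lemma mi_image1: "mi R (image_mset f M) (image_mset g N) \<Longrightarrow> mi (\<lambda>a b. R (f a) (g b)) M N"
proof (induction M arbitrary: N)
  case empty
  then show ?case by (simp add: mi.mi_empty)
next
  case (add a M)
  then have "mi R (add_mset (f a) (image_mset f M)) (image_mset g N)" by simp
  from mi_invL[OF this] obtain b N' where bN: "image_mset g N = add_mset b N'" "R (f a) b" "mi R (image_mset f M) N'" by blast
  then have "b \<in># image_mset g N" by simp
  then obtain c where c: "c \<in># N" "b = g c" by auto
  then obtain N'' where N'': "N = add_mset c N''" by (metis multi_member_split)
  then have "N' = image_mset g N''" using bN c by simp
  then have "mi (\<lambda>a b. R (f a) (g b)) M N''" using add.IH bN by simp
  then show ?case using N'' bN c by (simp add: mi.mi_add)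
qed

lemma mi_image2: "mi (\<lambda>a b. R (f a) (g b)) M N \<Longrightarrow> mi R (image_mset f M) (image_mset g N)"
  by (induction rule: mi.induct) (auto intro: mi.intros)

lemma mi_image: "mi R (image_mset f M) (image_mset g N) \<longleftrightarrow> mi (\<lambda>a b. R (f a) (g b)) M N"
  using mi_image1 mi_image2 by metis

lemma mi_size: "mi R M N \<Longrightarrow> size M \<le> size N"
  by (induction rule: mi.induct) auto

lemma mi_sum: "mi R M N \<Longrightarrow> (\<forall>a\<in>#M. \<forall>b\<in>#N. R a b \<longrightarrow> (w a :: nat) \<le> w b) \<Longrightarrow>
   sum_mset (image_mset w M) \<le> sum_mset (image_mset w N)"
  by (induction rule: mi.induct) auto

lemma finite_maximal:
  assumes "finite S" "S \<noteq> {}" "\<forall>x\<in>S. \<forall>y\<in>S. \<forall>z\<in>S. R x y \<longrightarrow> R y z \<longrightarrow> R x z"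
  shows "\<exists>m\<in>S. \<forall>y\<in>S. R m y \<longrightarrow> R y m"
  using assms
proof (induction S rule: finite_ne_induct)
  case (singleton x)
  then show ?case by auto
next
  case (insert a S)
  have tr: "\<And>x y z. x \<in> insert a S \<Longrightarrow> y \<in> insert a S \<Longrightarrow> z \<in> insert a S \<Longrightarrow> R x y \<Longrightarrow> R y z \<Longrightarrow> R x z"
    using insert.prems by blast
  have "\<forall>x\<in>S. \<forall>y\<in>S. \<forall>z\<in>S. R x y \<longrightarrow> R y z \<longrightarrow> R x z" using tr by blast
  then obtain m where m: "m \<in> S" "\<forall>y\<in>S. R m y \<longrightarrow> R y m" using insert.IH by blast
  show ?case
  proof (cases "R m a \<and> \<not> R a m")
    case True
    have "\<forall>y\<in>insert a S. R a y \<longrightarrow> R y a"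
    proof (intro ballI impI)
      fix y assume y: "y \<in> insert a S" "R a y"
      show "R y a"
      proof (cases "y = a")
        case False
        then have "y \<in> S" using y by auto
        have "R m y" using tr[of m a y] True y m(1) by simp
        then have "R y m" using m \<open>y \<in> S\<close> by blast
        then show ?thesis using tr[of y m a] True m(1) \<open>y \<in> S\<close> by simp
      qed (use y in auto)
    qed
    then show ?thesis by blast
  next
    case False
    then show ?thesis using m by (intro bexI[of _ m]) auto
  qed
qed

lemma mi_antisym:
  assumes "mi R M N" "mi R N M" "set_mset M \<union> set_mset N \<subseteq> S"
    "\<And>x y z. x \<in> S \<Longrightarrow> y \<in> S \<Longrightarrow> z \<in> S \<Longrightarrow> R x y \<Longrightarrow> R y z \<Longrightarrow> R x z"
    "\<And>x y. x \<in># M \<Longrightarrow> y \<in> S \<Longrightarrow> R x y \<Longrightarrow> R y x \<Longrightarrow> x = y"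
  shows "M = N"
  using assms
proof (induction "size M" arbitrary: M N rule: less_induct)
  case less
  show ?case
  proof (cases "M = {#}")
    case True
    then show ?thesis using less.prems(2) mi_nil_right by metis
  next
    case False
    let ?S = "set_mset M \<union> set_mset N"
    have tr: "\<forall>x\<in>?S. \<forall>y\<in>?S. \<forall>z\<in>?S. R x y \<longrightarrow> R y z \<longrightarrow> R x z"
      using less.prems(3,4) by (meson subsetD)
    have ne: "?S \<noteq> {}" using False by simp
    obtain m where m: "m \<in> ?S" "\<forall>y\<in>?S. R m y \<longrightarrow> R y m"
      using finite_maximal[OF _ ne tr] by blast
    have "\<exists>M' N'. M = add_mset m M' \<and> N = add_mset m N'"
    proof (cases "m \<in># M")
      case True
      then obtain M' where M': "M = add_mset m M'" by (metis multi_member_split)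
      from mi_invL[OF less.prems(1)[unfolded M']] obtain b N' where
        bN: "N = add_mset b N'" "R m b" by blast
      then have "R b m" using m by simp
      then have "b = m" using less.prems(5)[of m b] less.prems(3) bN M' by simp
      then show ?thesis using M' bN by blast
    next
      case False
      then have "m \<in># N" using m by simp
      then obtain N' where N': "N = add_mset m N'" by (metis multi_member_split)
      from mi_invL[OF less.prems(2)[unfolded N']] obtain b M' where
        bM: "M = add_mset b M'" "R m b" by blast
      then have "R b m" using m by simp
      then have "b = m" using less.prems(5)[of b m] less.prems(3) bM N' by simp
      then show ?thesis using N' bM by blast
    qed
    then obtain M' N' where MN: "M = add_mset m M'" "N = add_mset m N'" by blast
    from mi_invL[OF less.prems(1)[unfolded MN(1)]] obtain b N'' where
      b1: "add_mset m N' = add_mset b N''" "R m b" "mi R M' N''" using MN by metis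
    have "b \<in># add_mset m N'" using b1(1) by simp
    then have "R b m" using m b1 MN by simp
    then have "b = m" using less.prems(5)[of m b] less.prems(3) b1 MN by simp
    then have mi1: "mi R M' N'" using b1 by simp
    from mi_invL[OF less.prems(2)[unfolded MN(2)]] obtain b' M'' where
      b2: "add_mset m M' = add_mset b' M''" "R m b'" "mi R N' M''" using MN by metis
    have "b' \<in># add_mset m M'" using b2(1) by simp
    then have "R b' m" using m b2 MN by simp
    then have "b' = m" using less.prems(5)[of b' m] less.prems(3) b2 MN by simp
    then have mi2: "mi R N' M'" using b2 by simp
    have sub: "set_mset M' \<union> set_mset N' \<subseteq> S" using MN less.prems(3) by auto
    have "M' = N'"
      apply (rule less.hyps[OF _ mi1 mi2 sub less.prems(4)])
      using MN less.prems(5) by auto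
    then show ?thesis using MN by simp
  qed
qed


primrec sz :: "'a ktree \<Rightarrow> nat" where
  "sz (Bar x) = 0"
| "sz (Star i \<sigma>) = Suc (sum_mset (image_mset sz \<sigma>))"

lemma sz_mem: "t \<in># \<sigma> \<Longrightarrow> sz t < sz (Star i \<sigma>)"
proof -
  assume "t \<in># \<sigma>"
  then obtain \<rho> where "\<sigma> = add_mset t \<rho>" by (metis multi_member_split)
  then show ?thesis by simp
qed

lemma tle_Bar_Bar[simp]: "tle le (Bar x) (Bar y) \<longleftrightarrow> le x y"
  by (auto elim: tle.cases intro: tle.intros)

lemma tle_Bar_Star[simp]: "tle le (Bar x) (Star j ts) \<longleftrightarrow> (\<exists>t\<in>#ts. tle le (Bar x) t)"
  by (auto elim: tle.cases intro: tle.intros)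

lemma tle_Star_Bar[simp]: "\<not> tle le (Star i \<sigma>) (Bar y)"
  by (auto elim: tle.cases)

lemma tle_Star_Star[simp]: "tle le (Star i \<sigma>) (Star j \<tau>) \<longleftrightarrow>
   (i = j \<and> mi (tle le) \<sigma> \<tau>) \<or> (i \<le> j \<and> (\<exists>t\<in>#\<tau>. tle le (Star i \<sigma>) t))"
  by (auto elim: tle.cases intro: tle.intros simp: mle_mi)

lemma tcar_Bar[simp]: "Bar x \<in> tcar n A \<longleftrightarrow> x \<in> A"
  by (auto elim: tcar.cases intro: tcar.intros)

lemma tcar_Star[simp]: "Star i \<sigma> \<in> tcar n A \<longleftrightarrow> i < n \<and> (\<forall>t\<in>#\<sigma>. t \<in> tcar n A)"
  by (auto elim: tcar.cases intro: tcar.intros)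

lemma tle_label: "tle le (Star i \<sigma>) t \<Longrightarrow> t = Star j \<tau> \<Longrightarrow> i \<le> j"
  by (induction "Star i \<sigma>" t arbitrary: j \<tau> rule: tle.induct) auto

lemma tle_refl: "t \<in> tcar n A \<Longrightarrow> (\<forall>x\<in>A. le x x) \<Longrightarrow> tle le t t"
proof (induction t rule: ktree.induct)
  case (Bar x) then show ?case by simp
next
  case (Star i \<sigma>)
  then have "mi (tle le) \<sigma> \<sigma>" by (intro mi_refl) auto
  then show ?case by simp
qed

lemma tle_sz: "tle le a b \<Longrightarrow> sz a \<le> sz b"
proof (induction rule: tle.induct)
  case (bar_star t ts x j)
  then show ?case using sz_mem[OF bar_star(1), of j] by simp
next
  case (star_star \<sigma> \<tau> i)
  then have "mi (\<lambda>x1 x2. tle le x1 x2 \<and> sz x1 \<le> sz x2) \<sigma> \<tau>" by (simp add: mle_mi)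
  then have "sum_mset (image_mset sz \<sigma>) \<le> sum_mset (image_mset sz \<tau>)"
    by (rule mi_sum) auto
  then show ?case by simp
next
  case (star_below i j t ts \<sigma>)
  then show ?case using sz_mem[OF star_below(2), of j] by simp
qed simp

lemma tle_trans:
  assumes "c \<in> tcar n A"
    and tr: "\<And>x y z. x \<in> A \<Longrightarrow> y \<in> A \<Longrightarrow> z \<in> A \<Longrightarrow> le x y \<Longrightarrow> le y z \<Longrightarrow> le x z"
  shows "a \<in> tcar n A \<Longrightarrow> b \<in> tcar n A \<Longrightarrow> tle le a b \<Longrightarrow> tle le b c \<Longrightarrow> tle le a c"
  using assms(1)
proof (induction c arbitrary: a b rule: ktree.induct)
  case (Bar z)
  obtain y where b: "b = Bar y" using Bar.prems(4) by (cases b) simp_all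
  obtain x where a: "a = Bar x" using Bar.prems(3) b by (cases a) simp_all
  show ?case using Bar.prems a b tr[of x y z] by simp
next
  case (Star k \<tau>)
  have IH: "\<And>t a b. t \<in># \<tau> \<Longrightarrow> a \<in> tcar n A \<Longrightarrow> b \<in> tcar n A \<Longrightarrow> tle le a b \<Longrightarrow> tle le b t \<Longrightarrow> tle le a t"
  proof -
    fix t a b assume "t \<in># \<tau>" "a \<in> tcar n A" "b \<in> tcar n A" "tle le a b" "tle le b t"
    moreover have "t \<in> tcar n A" using Star.prems(5) \<open>t \<in># \<tau>\<close> by simp
    ultimately show "tle le a t" using Star.IH by blast
  qed
  have tau: "\<And>t. t \<in># \<tau> \<Longrightarrow> t \<in> tcar n A" using Star.prems(5) by simp
  show ?case
  proof (cases b)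
    case (Bar y)
    obtain x where a: "a = Bar x" using Star.prems(3) Bar by (cases a) simp_all
    obtain t where t: "t \<in># \<tau>" "tle le (Bar y) t" using Star.prems(4) Bar by auto
    have "tle le a t" using IH[OF t(1) Star.prems(1,2,3)] t(2) Bar by simp
    then show ?thesis using a t by auto
  next
    case (Star j \<rho>)
    note b = this
    have rho: "\<And>r. r \<in># \<rho> \<Longrightarrow> r \<in> tcar n A" using Star.prems(2) b by simp
    have "(j = k \<and> mi (tle le) \<rho> \<tau>) \<or> (j \<le> k \<and> (\<exists>t\<in>#\<tau>. tle le b t))"
      using Star.prems(4) b by simp
    then show ?thesis
    proof
      assume 1: "j = k \<and> mi (tle le) \<rho> \<tau>"
      show ?thesis
      proof (cases a)
        case (Bar x)
        obtain r where r: "r \<in># \<rho>" "tle le a r" using Star.prems(3) b Bar by auto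
        obtain t where t: "t \<in># \<tau>" "tle le r t" using mi_elem[OF conjunct2[OF 1] r(1)] by blast
        have "tle le a t" using IH[OF t(1) Star.prems(1) rho[OF r(1)] r(2) t(2)] .
        then show ?thesis using Bar t by auto
      next
        case (Star i \<sigma>)
        note a = this
        have sig: "\<And>s. s \<in># \<sigma> \<Longrightarrow> s \<in> tcar n A" using Star.prems(1) a by simp
        have "(i = j \<and> mi (tle le) \<sigma> \<rho>) \<or> (i \<le> j \<and> (\<exists>r\<in>#\<rho>. tle le a r))"
          using Star.prems(3) a b by simp
        then show ?thesis
        proof
          assume h1: "i = j \<and> mi (tle le) \<sigma> \<rho>"
          have "mi (tle le) \<sigma> \<tau>"
          proof (rule mi_trans[OF conjunct2[OF h1] conjunct2[OF 1]])
            show "\<forall>a\<in>#\<sigma>. \<forall>b\<in>#\<rho>. \<forall>c\<in>#\<tau>. tle le a b \<longrightarrow> tle le b c \<longrightarrow> tle le a c"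
              using IH sig rho by blast
          qed
          then show ?thesis using a 1 h1 by simp
        next
          assume 2: "i \<le> j \<and> (\<exists>r\<in>#\<rho>. tle le a r)"
          then obtain r where r: "r \<in># \<rho>" "tle le a r" by blast
          obtain t where t: "t \<in># \<tau>" "tle le r t" using mi_elem[OF conjunct2[OF 1] r(1)] by blast
          have "tle le a t" using IH[OF t(1) Star.prems(1) rho[OF r(1)] r(2) t(2)] .
          then show ?thesis using a t 2 1 by auto
        qed
      qed
    next
      assume 2: "j \<le> k \<and> (\<exists>t\<in>#\<tau>. tle le b t)"
      then obtain t where t: "t \<in># \<tau>" "tle le b t" by blast
      have at: "tle le a t" using IH[OF t(1) Star.prems(1,2,3) t(2)] .
      show ?thesis
      proof (cases a)
        case (Bar x) then show ?thesis using at t by auto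
      next
        case (Star i \<sigma>)
        have "i \<le> j" using tle_label[OF Star.prems(3)[unfolded \<open>a = Star i \<sigma>\<close>] b] .
        then show ?thesis using at t Star 2 by auto
      qed
    qed
  qed
qed


lemma tle_trans2:
  assumes trr: "\<forall>x\<in>A. \<forall>y\<in>A. \<forall>z\<in>A. le x y \<longrightarrow> le y z \<longrightarrow> le x z"
    and "a \<in> tcar n A" "b \<in> tcar n A" "c \<in> tcar n A" "tle le a b" "tle le b c"
  shows "tle le a c"
proof -
  have tr: "\<And>x y z. x \<in> A \<Longrightarrow> y \<in> A \<Longrightarrow> z \<in> A \<Longrightarrow> le x y \<Longrightarrow> le y z \<Longrightarrow> le x z"
    using trr by blast
  show ?thesis using tle_trans[of c n A le a b, OF assms(4) tr assms(2,3,5,6)] .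
qed

lemma tle_antisym:
  assumes tr: "\<And>x y z. x \<in> A \<Longrightarrow> y \<in> A \<Longrightarrow> z \<in> A \<Longrightarrow> le x y \<Longrightarrow> le y z \<Longrightarrow> le x z"
    and an: "\<And>x y. x \<in> A \<Longrightarrow> y \<in> A \<Longrightarrow> le x y \<Longrightarrow> le y x \<Longrightarrow> x = y"
  shows "a \<in> tcar n A \<Longrightarrow> b \<in> tcar n A \<Longrightarrow> tle le a b \<Longrightarrow> tle le b a \<Longrightarrow> a = b"
proof (induction a arbitrary: b rule: ktree.induct)
  case (Bar x)
  obtain y where b: "b = Bar y" using Bar.prems(4) by (cases b) simp_all
  show ?case using Bar.prems b an[of x y] by simp
next
  case (Star i \<sigma>)
  obtain j \<tau> where b: "b = Star j \<tau>" using Star.prems(3) by (cases b) simp_all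
  have nb: "\<not> (\<exists>t\<in>#\<tau>. tle le (Star i \<sigma>) t)"
  proof
    assume "\<exists>t\<in>#\<tau>. tle le (Star i \<sigma>) t"
    then obtain t where t: "t \<in># \<tau>" "tle le (Star i \<sigma>) t" by blast
    have "sz (Star i \<sigma>) \<le> sz t" using tle_sz[OF t(2)] .
    also have "\<dots> < sz b" using sz_mem[OF t(1)] b by simp
    also have "\<dots> \<le> sz (Star i \<sigma>)" using tle_sz[OF Star.prems(4)] .
    finally show False by simp
  qed
  have na: "\<not> (\<exists>s\<in>#\<sigma>. tle le (Star j \<tau>) s)"
  proof
    assume "\<exists>s\<in>#\<sigma>. tle le (Star j \<tau>) s"
    then obtain t where t: "t \<in># \<sigma>" "tle le (Star j \<tau>) t" by blast
    have "sz (Star j \<tau>) \<le> sz t" using tle_sz[OF t(2)] .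
    also have "\<dots> < sz (Star i \<sigma>)" using sz_mem[OF t(1)] by simp
    also have "\<dots> \<le> sz b" using tle_sz[OF Star.prems(3)] .
    finally show False using b by simp
  qed
  have 1: "i = j" "mi (tle le) \<sigma> \<tau>" using Star.prems(3) b nb by auto
  have 2: "mi (tle le) \<tau> \<sigma>" using Star.prems(4) b na by auto
  have "\<sigma> = \<tau>"
  proof (rule mi_antisym[OF 1(2) 2, of "tcar n A"])
    show "set_mset \<sigma> \<union> set_mset \<tau> \<subseteq> tcar n A" using Star.prems(1,2) b by auto
    show "\<And>x y z. x \<in> tcar n A \<Longrightarrow> y \<in> tcar n A \<Longrightarrow> z \<in> tcar n A \<Longrightarrow> tle le x y \<Longrightarrow> tle le y z \<Longrightarrow> tle le x z"
    proof -
      have trr: "\<forall>x\<in>A. \<forall>y\<in>A. \<forall>z\<in>A. le x y \<longrightarrow> le y z \<longrightarrow> le x z" using tr by blast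
      fix x y z assume "x \<in> tcar n A" "y \<in> tcar n A" "z \<in> tcar n A" "tle le x y" "tle le y z"
      then show "tle le x z" using tle_trans2[OF trr] by blast
    qed
    show "\<And>x y. x \<in># \<sigma> \<Longrightarrow> y \<in> tcar n A \<Longrightarrow> tle le x y \<Longrightarrow> tle le y x \<Longrightarrow> x = y"
    proof -
      fix x y assume h: "x \<in># \<sigma>" "y \<in> tcar n A" "tle le x y" "tle le y x"
      have "x \<in> tcar n A" using Star.prems(1) h(1) by simp
      then show "x = y" using Star.IH[OF h(1)] h(2-4) by blast
    qed
  qed
  then show ?case using 1 b by simp
qed

lemma tle_antisym2:
  assumes trr: "\<forall>x\<in>A. \<forall>y\<in>A. \<forall>z\<in>A. le x y \<longrightarrow> le y z \<longrightarrow> le x z"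
    and anr: "\<forall>x\<in>A. \<forall>y\<in>A. le x y \<longrightarrow> le y x \<longrightarrow> x = y"
    and "a \<in> tcar n A" "b \<in> tcar n A" "tle le a b" "tle le b a"
  shows "a = b"
  apply (rule tle_antisym[of A le])
  using trr anr assms(3-) by blast+

lemma is_po_TO: "is_po X \<Longrightarrow> is_po (TO n X)"
proof -
  assume po: "is_po X"
  have r: "\<forall>x\<in>car X. leq X x x" and an: "\<And>x y. x \<in> car X \<Longrightarrow> y \<in> car X \<Longrightarrow> leq X x y \<Longrightarrow> leq X y x \<Longrightarrow> x = y"
    and tr: "\<And>x y z. x \<in> car X \<Longrightarrow> y \<in> car X \<Longrightarrow> z \<in> car X \<Longrightarrow> leq X x y \<Longrightarrow> leq X y z \<Longrightarrow> leq X x z"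
    using po unfolding is_po_def by blast+
  have cT: "car (TO n X) = tcar n (car X)" and lT: "leq (TO n X) = tle (leq X)"
    by (auto simp: TO_def car_def leq_def)
  have 1: "\<forall>x\<in>car (TO n X). leq (TO n X) x x" unfolding cT lT using tle_refl r by blast
  have 2: "\<forall>x\<in>car (TO n X). \<forall>y\<in>car (TO n X). leq (TO n X) x y \<and> leq (TO n X) y x \<longrightarrow> x = y"
  proof -
    have trr: "\<forall>x\<in>car X. \<forall>y\<in>car X. \<forall>z\<in>car X. leq X x y \<longrightarrow> leq X y z \<longrightarrow> leq X x z" using tr by blast
    have anr: "\<forall>x\<in>car X. \<forall>y\<in>car X. leq X x y \<longrightarrow> leq X y x \<longrightarrow> x = y" using an by blast
    show ?thesis unfolding cT lT using tle_antisym2[OF trr anr] by blast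
  qed
  have 3: "\<forall>x\<in>car (TO n X). \<forall>y\<in>car (TO n X). \<forall>z\<in>car (TO n X). leq (TO n X) x y \<and> leq (TO n X) y z \<longrightarrow> leq (TO n X) x z"
  proof -
    have trr: "\<forall>x\<in>car X. \<forall>y\<in>car X. \<forall>z\<in>car X. leq X x y \<longrightarrow> leq X y z \<longrightarrow> leq X x z" using tr by blast
    show ?thesis unfolding cT lT using tle_trans2[OF trr] by blast
  qed
  show ?thesis unfolding is_po_def using 1 2 3 by blast
qed

lemma is_po_MO: "is_po X \<Longrightarrow> is_po (MO X)"
proof -
  assume po: "is_po X"
  have r: "\<forall>x\<in>car X. leq X x x" and an: "\<forall>x\<in>car X. \<forall>y\<in>car X. leq X x y \<longrightarrow> leq X y x \<longrightarrow> x = y"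
    and tr: "\<forall>x\<in>car X. \<forall>y\<in>car X. \<forall>z\<in>car X. leq X x y \<longrightarrow> leq X y z \<longrightarrow> leq X x z"
    using po unfolding is_po_def by blast+
  have cM: "car (MO X) = {\<sigma>. set_mset \<sigma> \<subseteq> car X}" by (simp add: MO_def car_def)
  have lM: "leq (MO X) = mi (leq X)"
    by (rule ext, rule ext) (simp add: MO_def leq_def mle_mi)
  have 1: "\<forall>x\<in>car (MO X). leq (MO X) x x" unfolding cM lM
  proof
    fix M assume "M \<in> {\<sigma>. set_mset \<sigma> \<subseteq> car X}"
    then have "\<forall>x\<in>#M. leq X x x" using r by blast
    then show "mi (leq X) M M" by (rule mi_refl)
  qed
  have 2: "\<forall>x\<in>car (MO X). \<forall>y\<in>car (MO X). leq (MO X) x y \<and> leq (MO X) y x \<longrightarrow> x = y"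
    unfolding cM lM
  proof (intro ballI impI)
    fix M N assume M: "M \<in> {\<sigma>. set_mset \<sigma> \<subseteq> car X}" and N: "N \<in> {\<sigma>. set_mset \<sigma> \<subseteq> car X}"
      and h: "mi (leq X) M N \<and> mi (leq X) N M"
    show "M = N"
    proof (rule mi_antisym[of "leq X" M N "car X"])
      show "mi (leq X) M N" "mi (leq X) N M" using h by simp_all
      show "set_mset M \<union> set_mset N \<subseteq> car X" using M N by simp
      show "\<And>x y z. x \<in> car X \<Longrightarrow> y \<in> car X \<Longrightarrow> z \<in> car X \<Longrightarrow> leq X x y \<Longrightarrow> leq X y z \<Longrightarrow> leq X x z"
        using tr by blast
      show "\<And>x y. x \<in># M \<Longrightarrow> y \<in> car X \<Longrightarrow> leq X x y \<Longrightarrow> leq X y x \<Longrightarrow> x = y"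
        using an M by blast
    qed
  qed
  have 3: "\<forall>x\<in>car (MO X). \<forall>y\<in>car (MO X). \<forall>z\<in>car (MO X). leq (MO X) x y \<and> leq (MO X) y z \<longrightarrow> leq (MO X) x z"
    unfolding cM lM
  proof (intro ballI impI)
    fix A B C assume A: "A \<in> {\<sigma>. set_mset \<sigma> \<subseteq> car X}" and B: "B \<in> {\<sigma>. set_mset \<sigma> \<subseteq> car X}"
      and C: "C \<in> {\<sigma>. set_mset \<sigma> \<subseteq> car X}" and h: "mi (leq X) A B \<and> mi (leq X) B C"
    show "mi (leq X) A C"
    proof (rule mi_trans[of "leq X" A B "leq X" C])
      show "mi (leq X) A B" "mi (leq X) B C" using h by simp_all
      have "set_mset A \<subseteq> car X" "set_mset B \<subseteq> car X" "set_mset C \<subseteq> car X" using A B C by simp_all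
      then show "\<forall>a\<in>#A. \<forall>b\<in>#B. \<forall>c\<in>#C. leq X a b \<longrightarrow> leq X b c \<longrightarrow> leq X a c"
        using tr by blast
    qed
  qed
  show ?thesis unfolding is_po_def using 1 2 3 by blast
qed
lemma is_po_sub: "is_po X \<Longrightarrow> S \<subseteq> car X \<Longrightarrow> is_po (S, leq X)"
proof -
  assume po: "is_po X" and S: "S \<subseteq> car X"
  have c: "car (S, leq X) = S" and l: "leq (S, leq X) = leq X" by (simp_all add: car_def leq_def)
  show ?thesis using po S unfolding is_po_def c l by (meson subsetD)
qed


lemma tcar_map: "t \<in> tcar n B \<Longrightarrow> (\<forall>x\<in>set_ktree t. f x \<in> A) \<Longrightarrow> map_ktree f t \<in> tcar n A"
  by (induction rule: tcar.induct) auto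

lemma set_ktree_tcar: "t \<in> tcar n A \<Longrightarrow> set_ktree t \<subseteq> A"
  by (induction rule: tcar.induct) auto

lemma finite_set_ktree: "finite (set_ktree t)"
  by (induction t rule: ktree.induct) auto

lemma map_ktree_ident: "(\<forall>x\<in>set_ktree t. f x = x) \<Longrightarrow> map_ktree f t = t"
proof -
  assume "\<forall>x\<in>set_ktree t. f x = x"
  then have "map_ktree f t = map_ktree id t" by (intro ktree.map_cong0) auto
  then show ?thesis by (simp add: ktree.map_id)
qed

lemma tle_reflect:
  assumes fr: "\<forall>x\<in>A. \<forall>y\<in>A. le' (f x) (f y) \<longrightarrow> le x y"
  shows "t \<in> tcar n A \<Longrightarrow> s \<in> tcar n A \<Longrightarrow> tle le' (map_ktree f s) (map_ktree f t) \<Longrightarrow> tle le s t"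
proof (induction t arbitrary: s rule: ktree.induct)
  case (Bar y)
  then show ?case using fr by (cases s) auto
next
  case (Star j \<tau>)
  have IH: "\<And>t s. t \<in># \<tau> \<Longrightarrow> s \<in> tcar n A \<Longrightarrow> tle le' (map_ktree f s) (map_ktree f t) \<Longrightarrow> tle le s t"
    using Star.IH Star.prems(1) by simp
  show ?case
  proof (cases s)
    case (Bar x)
    then obtain t' where t': "t' \<in># \<tau>" "tle le' (Bar (f x)) (map_ktree f t')" using Star.prems(3) by auto
    then have "tle le s t'" using IH[of t' s] Bar Star.prems(2) by simp
    then show ?thesis using Bar t'(1) by auto
  next
    case (Star i \<sigma>)
    note s = this
    have "(i = j \<and> mi (tle le') (image_mset (map_ktree f) \<sigma>) (image_mset (map_ktree f) \<tau>)) \<or>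
          (i \<le> j \<and> (\<exists>t\<in>#\<tau>. tle le' (map_ktree f s) (map_ktree f t)))"
      using Star.prems(3) s by auto
    then show ?thesis
    proof
      assume h: "i = j \<and> mi (tle le') (image_mset (map_ktree f) \<sigma>) (image_mset (map_ktree f) \<tau>)"
      then have "mi (\<lambda>a b. tle le' (map_ktree f a) (map_ktree f b)) \<sigma> \<tau>" using mi_image by blast
      then have "mi (tle le) \<sigma> \<tau>"
        by (rule mi_mono) (use IH Star.prems(2) s in auto)
      then show ?thesis using h s by simp
    next
      assume h: "i \<le> j \<and> (\<exists>t\<in>#\<tau>. tle le' (map_ktree f s) (map_ktree f t))"
      then obtain t' where "t' \<in># \<tau>" "tle le' (map_ktree f s) (map_ktree f t')" by blast
      then have "tle le s t'" using IH Star.prems(2) by blast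
      then show ?thesis using h s \<open>t' \<in># \<tau>\<close> by auto
    qed
  qed
qed

lemma tle_preserve:
  assumes fr: "\<forall>x\<in>A. \<forall>y\<in>A. le x y \<longrightarrow> le' (f x) (f y)"
  shows "t \<in> tcar n A \<Longrightarrow> s \<in> tcar n A \<Longrightarrow> tle le s t \<Longrightarrow> tle le' (map_ktree f s) (map_ktree f t)"
proof (induction t arbitrary: s rule: ktree.induct)
  case (Bar y)
  then show ?case using fr by (cases s) auto
next
  case (Star j \<tau>)
  have IH: "\<And>t s. t \<in># \<tau> \<Longrightarrow> s \<in> tcar n A \<Longrightarrow> tle le s t \<Longrightarrow> tle le' (map_ktree f s) (map_ktree f t)"
    using Star.IH Star.prems(1) by simp
  show ?case
  proof (cases s)
    case (Bar x)
    then obtain t' where t': "t' \<in># \<tau>" "tle le (Bar x) t'" using Star.prems(3) by auto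
    then have "tle le' (map_ktree f s) (map_ktree f t')" using IH[of t' s] Bar Star.prems(2) by simp
    then show ?thesis using Bar t'(1) by auto
  next
    case (Star i \<sigma>)
    note s = this
    have "(i = j \<and> mi (tle le) \<sigma> \<tau>) \<or> (i \<le> j \<and> (\<exists>t\<in>#\<tau>. tle le s t))"
      using Star.prems(3) s by auto
    then show ?thesis
    proof
      assume h: "i = j \<and> mi (tle le) \<sigma> \<tau>"
      have "mi (\<lambda>a b. tle le' (map_ktree f a) (map_ktree f b)) \<sigma> \<tau>"
      proof (rule mi_mono[of "tle le"])
        show "mi (tle le) \<sigma> \<tau>" using h by simp
        show "\<forall>a\<in>#\<sigma>. \<forall>b\<in>#\<tau>. tle le a b \<longrightarrow> tle le' (map_ktree f a) (map_ktree f b)"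
          using IH Star.prems(2) s by simp
      qed
      then have "mi (tle le') (image_mset (map_ktree f) \<sigma>) (image_mset (map_ktree f) \<tau>)"
        using mi_image by blast
      then show ?thesis using h s by simp
    next
      assume h: "i \<le> j \<and> (\<exists>t\<in>#\<tau>. tle le s t)"
      then obtain t' where "t' \<in># \<tau>" "tle le s t'" by blast
      then have "tle le' (map_ktree f s) (map_ktree f t')" using IH Star.prems(2) by blast
      then show ?thesis using h s \<open>t' \<in># \<tau>\<close> by auto
    qed
  qed
qed

lemma tcar_surj:
  assumes "t \<in> tcar n B" "set_ktree t \<subseteq> f ` A"
  shows "\<exists>t'\<in>tcar n A. t = map_ktree f t'"
proof -
  let ?h = "inv_into A f"
  have "map_ktree ?h t \<in> tcar n A"
    using assms by (intro tcar_map) (auto intro: inv_into_into)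
  moreover have "map_ktree f (map_ktree ?h t) = t"
    unfolding ktree.map_comp using assms(2)
    by (intro map_ktree_ident) (auto simp: f_inv_into_f)
  ultimately show ?thesis by metis
qed

lemma tle_normal: "tle le s t \<Longrightarrow> fin_le le (set_ktree s) (set_ktree t)"
proof (induction rule: tle.induct)
  case (bar_bar x y)
  then show ?case by (simp add: fin_le_def)
next
  case (bar_star t ts x j)
  then show ?case by (auto simp: fin_le_def)
next
  case (star_star \<sigma> \<tau> i)
  then have m: "mi (\<lambda>x1 x2. tle le x1 x2 \<and> fin_le le (set_ktree x1) (set_ktree x2)) \<sigma> \<tau>" by (simp add: mle_mi)
  show ?case unfolding fin_le_def
  proof
    fix x assume "x \<in> set_ktree (Star i \<sigma>)"
    then obtain s where s: "s \<in># \<sigma>" "x \<in> set_ktree s" by auto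
    from mi_elem[OF m s(1)] obtain t where "t \<in># \<tau>" "fin_le le (set_ktree s) (set_ktree t)" by blast
    then obtain y where "y \<in> set_ktree t" "le x y" using s(2) unfolding fin_le_def by blast
    then show "\<exists>y\<in>set_ktree (Star i \<tau>). le x y" using \<open>t \<in># \<tau>\<close> by auto
  qed
next
  case (star_below i j t ts \<sigma>)
  show ?case unfolding fin_le_def
  proof
    fix x assume "x \<in> set_ktree (Star i \<sigma>)"
    then obtain y where "y \<in> set_ktree t" "le x y" using star_below.IH unfolding fin_le_def by blast
    then show "\<exists>y\<in>set_ktree (Star j ts). le x y" using star_below(2) by auto
  qed
qed


lemma car_WO: "car (WO n X) = {\<sigma>. set_mset \<sigma> \<subseteq> tcar n (car X)}"
  by (simp add: WO_def comp_obj_def MO_def TO_def car_def)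

lemma leq_WO: "leq (WO n X) = mi (tle (leq X))"
  by (rule ext, rule ext) (simp add: WO_def comp_obj_def MO_def TO_def leq_def mle_mi)

lemma WS_eq: "WS n X \<sigma> = \<Union> (set_ktree ` set_mset \<sigma>)"
  by (auto simp: WS_def comp_supp_def MS_def TS_def)

lemma WM_eq: "WM f \<sigma> = image_mset (map_ktree f) \<sigma>"
  by (simp add: WM_def MM_def)

lemma car_TmO: "car (TmO n X) = {Bar x | x. x \<in> car X} \<union> {Star 0 \<sigma> | \<sigma>. Star 0 \<sigma> \<in> tcar n (car X)}"
  by (simp add: TmO_def car_def)

lemma leq_TmO: "leq (TmO n X) = tle (leq X)"
  by (simp add: TmO_def leq_def)

lemma car_TO: "car (TO n X) = tcar n (car X)"
  by (simp add: TO_def car_def)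

lemma is_po_WO: "is_po X \<Longrightarrow> is_po (WO n X)"
  unfolding WO_def comp_obj_def by (intro is_po_MO is_po_TO)

lemma car_TmO_sub: "car (TmO (Suc n) X) \<subseteq> tcar (Suc n) (car X)"
  unfolding car_TmO by auto

lemma is_po_TmO: "is_po X \<Longrightarrow> is_po (TmO (Suc n) X)"
proof -
  assume "is_po X"
  then have "is_po (car (TmO (Suc n) X), leq (TO (Suc n) X))"
  proof (intro is_po_sub is_po_TO)
    show "car (TmO (Suc n) X) \<subseteq> car (TO (Suc n) X)" using car_TmO_sub by (simp add: car_TO)
  qed
  moreover have "TmO (Suc n) X = (car (TmO (Suc n) X), leq (TO (Suc n) X))"
    by (simp add: TmO_def TO_def car_def leq_def)
  ultimately show ?thesis by simp
qed

lemma qemb_inj: "is_po X \<Longrightarrow> is_po Y \<Longrightarrow> qemb f X Y \<Longrightarrow> inj_on f (car X)"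
  unfolding inj_on_def qemb_def is_po_def by metis

lemma qemb_WM:
  assumes "qemb f X Y"
  shows "qemb (WM f) (WO n X) (WO n Y)"
proof -
  have fc: "\<forall>x\<in>car X. f x \<in> car Y" and fr: "\<forall>x\<in>car X. \<forall>y\<in>car X. leq Y (f x) (f y) \<longrightarrow> leq X x y"
    using assms unfolding qemb_def by blast+
  have 1: "\<forall>\<sigma>\<in>car (WO n X). WM f \<sigma> \<in> car (WO n Y)"
    unfolding car_WO WM_eq
  proof (intro ballI)
    fix \<sigma> assume s: "\<sigma> \<in> {\<sigma>. set_mset \<sigma> \<subseteq> tcar n (car X)}"
    have "\<forall>t\<in>#\<sigma>. map_ktree f t \<in> tcar n (car Y)"
    proof
      fix t assume "t \<in># \<sigma>"
      then have "t \<in> tcar n (car X)" using s by blast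
      then show "map_ktree f t \<in> tcar n (car Y)"
        using set_ktree_tcar[OF \<open>t \<in> tcar n (car X)\<close>] fc by (intro tcar_map) auto
    qed
    then show "image_mset (map_ktree f) \<sigma> \<in> {\<sigma>. set_mset \<sigma> \<subseteq> tcar n (car Y)}" by auto
  qed
  have 2: "\<forall>\<sigma>\<in>car (WO n X). \<forall>\<tau>\<in>car (WO n X). leq (WO n Y) (WM f \<sigma>) (WM f \<tau>) \<longrightarrow> leq (WO n X) \<sigma> \<tau>"
    unfolding car_WO leq_WO WM_eq
  proof (intro ballI impI)
    fix \<sigma> \<tau> assume s: "\<sigma> \<in> {\<sigma>. set_mset \<sigma> \<subseteq> tcar n (car X)}" and t: "\<tau> \<in> {\<sigma>. set_mset \<sigma> \<subseteq> tcar n (car X)}"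
      and h: "mi (tle (leq Y)) (image_mset (map_ktree f) \<sigma>) (image_mset (map_ktree f) \<tau>)"
    have "mi (\<lambda>a b. tle (leq Y) (map_ktree f a) (map_ktree f b)) \<sigma> \<tau>" using h mi_image by blast
    then show "mi (tle (leq X)) \<sigma> \<tau>"
    proof (rule mi_mono)
      show "\<forall>a\<in>#\<sigma>. \<forall>b\<in>#\<tau>. tle (leq Y) (map_ktree f a) (map_ktree f b) \<longrightarrow> tle (leq X) a b"
        using tle_reflect[where A="car X" and le="leq X" and le'="leq Y" and f=f, OF fr] s t by blast
    qed
  qed
  show ?thesis unfolding qemb_def using 1 2 by blast
qed

lemma emb_WM:
  assumes "emb f X Y"
  shows "emb (WM f) (WO n X) (WO n Y)"
proof -
  have q: "qemb f X Y" and fp: "\<forall>x\<in>car X. \<forall>y\<in>car X. leq X x y \<longrightarrow> leq Y (f x) (f y)"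
    using assms unfolding emb_def by blast+
  have "\<forall>\<sigma>\<in>car (WO n X). \<forall>\<tau>\<in>car (WO n X). leq (WO n X) \<sigma> \<tau> \<longrightarrow> leq (WO n Y) (WM f \<sigma>) (WM f \<tau>)"
    unfolding car_WO leq_WO WM_eq
  proof (intro ballI impI)
    fix \<sigma> \<tau> assume s: "\<sigma> \<in> {\<sigma>. set_mset \<sigma> \<subseteq> tcar n (car X)}" and t: "\<tau> \<in> {\<sigma>. set_mset \<sigma> \<subseteq> tcar n (car X)}"
      and h: "mi (tle (leq X)) \<sigma> \<tau>"
    have "mi (\<lambda>a b. tle (leq Y) (map_ktree f a) (map_ktree f b)) \<sigma> \<tau>"
      using h
    proof (rule mi_mono)
      show "\<forall>a\<in>#\<sigma>. \<forall>b\<in>#\<tau>. tle (leq X) a b \<longrightarrow> tle (leq Y) (map_ktree f a) (map_ktree f b)"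
        using tle_preserve[where A="car X" and le="leq X" and le'="leq Y" and f=f, OF fp] s t by blast
    qed
    then show "mi (tle (leq Y)) (image_mset (map_ktree f) \<sigma>) (image_mset (map_ktree f) \<tau>)"
      using mi_image by blast
  qed
  then show ?thesis unfolding emb_def using qemb_WM[OF q] by blast
qed

lemma range_WM:
  assumes "qemb f X Y"
  shows "WM f ` car (WO n X) = {\<sigma>\<in>car (WO n Y). WS n Y \<sigma> \<subseteq> f ` car X}"
proof
  have fc: "\<forall>x\<in>car X. f x \<in> car Y" using assms unfolding qemb_def by blast
  show "WM f ` car (WO n X) \<subseteq> {\<sigma>\<in>car (WO n Y). WS n Y \<sigma> \<subseteq> f ` car X}"
  proof
    fix \<rho> assume "\<rho> \<in> WM f ` car (WO n X)"
    then obtain \<sigma> where s: "\<sigma> \<in> car (WO n X)" "\<rho> = WM f \<sigma>" by blast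
    have "\<rho> \<in> car (WO n Y)" using qemb_WM[OF assms] s unfolding qemb_def by blast
    moreover have "WS n Y \<rho> \<subseteq> f ` car X"
      using s set_ktree_tcar unfolding WS_eq WM_eq car_WO by (fastforce simp: ktree.set_map)
    ultimately show "\<rho> \<in> {\<sigma>\<in>car (WO n Y). WS n Y \<sigma> \<subseteq> f ` car X}" by blast
  qed
next
  show "{\<sigma>\<in>car (WO n Y). WS n Y \<sigma> \<subseteq> f ` car X} \<subseteq> WM f ` car (WO n X)"
  proof
    fix \<rho> assume r: "\<rho> \<in> {\<sigma>\<in>car (WO n Y). WS n Y \<sigma> \<subseteq> f ` car X}"
    let ?h = "inv_into (car X) f"
    let ?\<sigma> = "image_mset (map_ktree ?h) \<rho>"
    have ts: "\<And>t. t \<in># \<rho> \<Longrightarrow> t \<in> tcar n (car Y) \<and> set_ktree t \<subseteq> f ` car X"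
      using r unfolding car_WO WS_eq by blast
    have "?\<sigma> \<in> car (WO n X)" unfolding car_WO
    proof -
      have "\<forall>t\<in>#\<rho>. map_ktree ?h t \<in> tcar n (car X)"
      proof
        fix t assume "t \<in># \<rho>"
        then show "map_ktree ?h t \<in> tcar n (car X)"
          using ts by (intro tcar_map) (auto intro: inv_into_into)
      qed
      then show "?\<sigma> \<in> {\<sigma>. set_mset \<sigma> \<subseteq> tcar n (car X)}" by auto
    qed
    moreover have "WM f ?\<sigma> = \<rho>"
    proof -
      have "WM f ?\<sigma> = image_mset (map_ktree f \<circ> map_ktree ?h) \<rho>"
        unfolding WM_eq by (simp add: image_mset.compositionality)
      also have "\<dots> = image_mset id \<rho>"
      proof (rule multiset.map_cong0)
        fix t assume "t \<in> set_mset \<rho>"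
        then have "set_ktree t \<subseteq> f ` car X" using ts by blast
        then show "(map_ktree f \<circ> map_ktree ?h) t = id t"
          unfolding comp_def ktree.map_comp by (simp, intro map_ktree_ident) (auto simp: f_inv_into_f)
      qed
      finally show ?thesis by simp
    qed
    ultimately show "\<rho> \<in> WM f ` car (WO n X)" by (metis image_eqI)
  qed
qed

lemma normal_WO: "normal (WO n) (WS n)"
  unfolding normal_def
proof (intro allI impI ballI)
  fix X :: "'a po" and \<sigma> \<tau>
  assume "is_po X" "\<sigma> \<in> car (WO n X)" "\<tau> \<in> car (WO n X)" and h: "leq (WO n X) \<sigma> \<tau>"
  then have m: "mi (tle (leq X)) \<sigma> \<tau>" by (simp add: leq_WO)
  show "fin_le (leq X) (WS n X \<sigma>) (WS n X \<tau>)" unfolding fin_le_def WS_eq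
  proof
    fix x assume "x \<in> \<Union> (set_ktree ` set_mset \<sigma>)"
    then obtain s where s: "s \<in># \<sigma>" "x \<in> set_ktree s" by blast
    from mi_elem[OF m s(1)] obtain t where t: "t \<in># \<tau>" "tle (leq X) s t" by blast
    from tle_normal[OF t(2)] s(2) obtain y where "y \<in> set_ktree t" "leq X x y" unfolding fin_le_def by blast
    then show "\<exists>y\<in>\<Union> (set_ktree ` set_mset \<tau>). leq X x y" using t(1) by blast
  qed
qed

lemma dil_WO: "po_dilator (WO n :: 'a po \<Rightarrow> _) (WS n) (WO n :: 'b po \<Rightarrow> _) (WS n)
      (WM :: ('a \<Rightarrow> 'a) \<Rightarrow> _) (WM :: ('a \<Rightarrow> 'b) \<Rightarrow> _) (WM :: ('b \<Rightarrow> 'c) \<Rightarrow> _) (WM :: ('a \<Rightarrow> 'c) \<Rightarrow> _)"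
  unfolding po_dilator_def
proof (intro conjI allI impI)
  fix X :: "'a po" assume po: "is_po X"
  show "is_po (WO n X)" using is_po_WO[OF po] .
  show "\<forall>\<sigma>\<in>car (WO n X). finite (WS n X \<sigma>) \<and> WS n X \<sigma> \<subseteq> car X"
    unfolding car_WO WS_eq using set_ktree_tcar by (auto simp: finite_set_ktree)
next
  fix X :: "'a po" and f :: "'a \<Rightarrow> 'a" assume h: "is_po X \<and> (\<forall>x\<in>car X. f x = x)"
  show "\<forall>\<sigma>\<in>car (WO n X). WM f \<sigma> = \<sigma>"
  proof
    fix \<sigma> assume s: "\<sigma> \<in> car (WO n X)"
    have "image_mset (map_ktree f) \<sigma> = image_mset id \<sigma>"
    proof (rule multiset.map_cong0)
      fix t assume "t \<in> set_mset \<sigma>"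
      then have "set_ktree t \<subseteq> car X" using s set_ktree_tcar unfolding car_WO by blast
      then show "map_ktree f t = id t" using h by (simp, intro map_ktree_ident) auto
    qed
    then show "WM f \<sigma> = \<sigma>" by (simp add: WM_eq)
  qed
next
  fix X :: "'a po" and Y :: "'b po" and f g :: "'a \<Rightarrow> 'b"
  assume h: "is_po X \<and> is_po Y \<and> qemb f X Y \<and> (\<forall>x\<in>car X. f x = g x)"
  show "\<forall>\<sigma>\<in>car (WO n X). WM f \<sigma> = WM g \<sigma>"
  proof
    fix \<sigma> assume s: "\<sigma> \<in> car (WO n X)"
    have "image_mset (map_ktree f) \<sigma> = image_mset (map_ktree g) \<sigma>"
    proof (rule multiset.map_cong0)
      fix t assume "t \<in> set_mset \<sigma>"
      then have "set_ktree t \<subseteq> car X" using s set_ktree_tcar unfolding car_WO by blast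
      then show "map_ktree f t = map_ktree g t" using h by (intro ktree.map_cong0) auto
    qed
    then show "WM f \<sigma> = WM g \<sigma>" by (simp add: WM_eq)
  qed
next
  fix X :: "'a po" and Y :: "'b po" and Z :: "'c po" and f :: "'a \<Rightarrow> 'b" and g :: "'b \<Rightarrow> 'c"
  show "\<forall>\<sigma>\<in>car (WO n X). WM (g \<circ> f) \<sigma> = WM g (WM f \<sigma>)"
    by (simp add: WM_eq image_mset.compositionality ktree.map_comp comp_def)
next
  fix X :: "'a po" and Y :: "'b po" and f :: "'a \<Rightarrow> 'b"
  assume h: "is_po X \<and> is_po Y \<and> qemb f X Y"
  show "qemb (WM f) (WO n X) (WO n Y)" using qemb_WM h by blast
  show "\<forall>\<sigma>\<in>car (WO n X). WS n Y (WM f \<sigma>) = f ` WS n X \<sigma>"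
    by (auto simp: WS_eq WM_eq ktree.set_map)
  assume e: "emb f X Y"
  show "emb (WM f) (WO n X) (WO n Y)" using emb_WM[OF e] .
  show "WM f ` car (WO n X) = {\<sigma> \<in> car (WO n Y). WS n Y \<sigma> \<subseteq> f ` car X}"
    using range_WM h by blast
qed


lemma TmS_eq: "TmS X t = set_ktree t"
  by (simp add: TmS_def)

lemma TmO_map:
  assumes "t \<in> car (TmO (Suc n) (X :: 'a po))" "\<forall>x\<in>set_ktree t. f x \<in> car (Y :: 'b po)"
  shows "map_ktree f t \<in> car (TmO (Suc n) Y)"
proof -
  have tc: "t \<in> tcar (Suc n) (car X)" using assms(1) car_TmO_sub by blast
  have mc: "map_ktree f t \<in> tcar (Suc n) (car Y)" using tcar_map[OF tc assms(2)] .
  from assms(1) consider x where "t = Bar x" | \<sigma> where "t = Star 0 \<sigma>" unfolding car_TmO by blast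
  then show ?thesis
  proof cases
    case 1 then show ?thesis using assms(2) unfolding car_TmO by auto
  next
    case 2 then show ?thesis using mc unfolding car_TmO by auto
  qed
qed

lemma car_TmO_set: "t \<in> car (TmO (Suc n) X) \<Longrightarrow> set_ktree t \<subseteq> car X"
  using car_TmO_sub set_ktree_tcar by blast

lemma dil_TmO: "po_dilator (TmO (Suc n) :: 'a po \<Rightarrow> _) TmS (TmO (Suc n) :: 'b po \<Rightarrow> _) TmS
      (map_ktree :: ('a \<Rightarrow> 'a) \<Rightarrow> _) (map_ktree :: ('a \<Rightarrow> 'b) \<Rightarrow> _)
      (map_ktree :: ('b \<Rightarrow> 'c) \<Rightarrow> _) (map_ktree :: ('a \<Rightarrow> 'c) \<Rightarrow> _)"
  unfolding po_dilator_def
proof (intro conjI allI impI)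
  fix X :: "'a po" assume po: "is_po X"
  show "is_po (TmO (Suc n) X)" using is_po_TmO[OF po] .
  show "\<forall>\<sigma>\<in>car (TmO (Suc n) X). finite (TmS X \<sigma>) \<and> TmS X \<sigma> \<subseteq> car X"
    unfolding TmS_eq using car_TmO_set[of _ n X] by (simp add: finite_set_ktree)
next
  fix X :: "'a po" and f :: "'a \<Rightarrow> 'a" assume h: "is_po X \<and> (\<forall>x\<in>car X. f x = x)"
  show "\<forall>\<sigma>\<in>car (TmO (Suc n) X). map_ktree f \<sigma> = \<sigma>"
  proof
    fix t assume "t \<in> car (TmO (Suc n) X)"
    then have "set_ktree t \<subseteq> car X" using car_TmO_set by blast
    then show "map_ktree f t = t" using h by (intro map_ktree_ident) auto
  qed
next
  fix X :: "'a po" and Y :: "'b po" and f g :: "'a \<Rightarrow> 'b"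
  assume h: "is_po X \<and> is_po Y \<and> qemb f X Y \<and> (\<forall>x\<in>car X. f x = g x)"
  show "\<forall>\<sigma>\<in>car (TmO (Suc n) X). map_ktree f \<sigma> = map_ktree g \<sigma>"
  proof
    fix t assume "t \<in> car (TmO (Suc n) X)"
    then have "set_ktree t \<subseteq> car X" using car_TmO_set by blast
    then show "map_ktree f t = map_ktree g t" using h by (intro ktree.map_cong0) auto
  qed
next
  fix X :: "'a po" and Y :: "'b po" and Z :: "'c po" and f :: "'a \<Rightarrow> 'b" and g :: "'b \<Rightarrow> 'c"
  show "\<forall>\<sigma>\<in>car (TmO (Suc n) X). map_ktree (g \<circ> f) \<sigma> = map_ktree g (map_ktree f \<sigma>)"
    by (simp add: ktree.map_comp)
next
  fix X :: "'a po" and Y :: "'b po" and f :: "'a \<Rightarrow> 'b"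
  assume h: "is_po X \<and> is_po Y \<and> qemb f X Y"
  have fc: "\<forall>x\<in>car X. f x \<in> car Y" and fr: "\<forall>x\<in>car X. \<forall>y\<in>car X. leq Y (f x) (f y) \<longrightarrow> leq X x y"
    using h unfolding qemb_def by blast+
  have 1: "\<forall>t\<in>car (TmO (Suc n) X). map_ktree f t \<in> car (TmO (Suc n) Y)"
  proof
    fix t assume t: "t \<in> car (TmO (Suc n) X)"
    show "map_ktree f t \<in> car (TmO (Suc n) Y)"
      using TmO_map[OF t] car_TmO_set[OF t] fc by blast
  qed
  have 2: "\<forall>s\<in>car (TmO (Suc n) X). \<forall>t\<in>car (TmO (Suc n) X).
     leq (TmO (Suc n) Y) (map_ktree f s) (map_ktree f t) \<longrightarrow> leq (TmO (Suc n) X) s t"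
    unfolding leq_TmO
    using tle_reflect[where A="car X" and le="leq X" and le'="leq Y" and f=f, OF fr] car_TmO_sub by blast
  show "qemb (map_ktree f) (TmO (Suc n) X) (TmO (Suc n) Y)" unfolding qemb_def using 1 2 by blast
  show "\<forall>\<sigma>\<in>car (TmO (Suc n) X). TmS Y (map_ktree f \<sigma>) = f ` TmS X \<sigma>"
    by (simp add: TmS_eq ktree.set_map)
  assume e: "emb f X Y"
  have fp: "\<forall>x\<in>car X. \<forall>y\<in>car X. leq X x y \<longrightarrow> leq Y (f x) (f y)" using e unfolding emb_def by blast
  have 3: "\<forall>s\<in>car (TmO (Suc n) X). \<forall>t\<in>car (TmO (Suc n) X).
     leq (TmO (Suc n) X) s t \<longrightarrow> leq (TmO (Suc n) Y) (map_ktree f s) (map_ktree f t)"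
    unfolding leq_TmO
    using tle_preserve[where A="car X" and le="leq X" and le'="leq Y" and f=f, OF fp] car_TmO_sub by blast
  show "emb (map_ktree f) (TmO (Suc n) X) (TmO (Suc n) Y)" unfolding emb_def qemb_def using 1 2 3 by blast
  show "map_ktree f ` car (TmO (Suc n) X) = {\<sigma> \<in> car (TmO (Suc n) Y). TmS Y \<sigma> \<subseteq> f ` car X}"
  proof
    show "map_ktree f ` car (TmO (Suc n) X) \<subseteq> {\<sigma> \<in> car (TmO (Suc n) Y). TmS Y \<sigma> \<subseteq> f ` car X}"
      using 1 car_TmO_set[of _ n X] by (fastforce simp: TmS_eq ktree.set_map)
  next
    show "{\<sigma> \<in> car (TmO (Suc n) Y). TmS Y \<sigma> \<subseteq> f ` car X} \<subseteq> map_ktree f ` car (TmO (Suc n) X)"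
    proof
      fix t assume t: "t \<in> {\<sigma> \<in> car (TmO (Suc n) Y). TmS Y \<sigma> \<subseteq> f ` car X}"
      let ?h = "inv_into (car X) f"
      have tY: "t \<in> car (TmO (Suc n) Y)" and ts: "set_ktree t \<subseteq> f ` car X" using t by (auto simp: TmS_eq)
      have "map_ktree ?h t \<in> car (TmO (Suc n) X)"
      proof (rule TmO_map[OF tY, where f="?h" and Y=X])
        show "\<forall>x\<in>set_ktree t. ?h x \<in> car X" using ts by (auto intro: inv_into_into)
      qed
      moreover have "map_ktree f (map_ktree ?h t) = t"
        unfolding ktree.map_comp using ts by (intro map_ktree_ident) (auto simp: f_inv_into_f)
      ultimately show "t \<in> map_ktree f ` car (TmO (Suc n) X)" by (metis image_eqI)
    qed
  qed
qed

lemma normal_TmO: "normal (TmO (Suc n)) TmS"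
  unfolding normal_def leq_TmO TmS_eq using tle_normal by blast


primrec unpi :: "'a ktree \<Rightarrow> 'a ktree ktree" where
  "unpi (Bar x) = Bar (Bar x)"
| "unpi (Star i \<sigma>) = (if i = 0 then Bar (Star 0 \<sigma>) else Star (i - 1) (image_mset unpi \<sigma>))"

definition low :: "'a ktree \<Rightarrow> bool" where
  "low t \<longleftrightarrow> (case t of Bar _ \<Rightarrow> True | Star i _ \<Rightarrow> i = 0)"

lemma low_simps[simp]: "low (Bar x)" "low (Star i \<sigma>) \<longleftrightarrow> i = 0"
  by (simp_all add: low_def)

lemma pi_unpi: "pi (unpi t) = t"
proof (induction t rule: ktree.induct)
  case (Star i \<sigma>)
  then show ?case
  proof (cases i)
    case (Suc j)
    have "image_mset (\<lambda>x. pi (unpi x)) \<sigma> = image_mset id \<sigma>"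
      by (rule multiset.map_cong0) (use Star in simp)
    then show ?thesis using Suc by (simp add: image_mset.compositionality comp_def)
  qed simp
qed simp

lemma car_TmO_low: "u \<in> car (TmO (Suc n) X) \<longleftrightarrow> low u \<and> u \<in> tcar (Suc n) (car X)"
  unfolding car_TmO by (cases u) auto

lemma unpi_tcar: "t \<in> tcar (Suc n) (car X) \<Longrightarrow> unpi t \<in> tcar n (car (TmO (Suc n) X))"
proof (induction rule: tcar.induct)
  case (bar x)
  then show ?case by (simp add: car_TmO_low)
next
  case (star i \<sigma>)
  show ?case
  proof (cases i)
    case 0
    then show ?thesis using star by (simp add: car_TmO_low)
  next
    case (Suc j)
    then show ?thesis using star by auto
  qed
qed

lemma sz_unpi: "u \<in> set_ktree (unpi t) \<Longrightarrow> sz u \<le> sz t"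
proof (induction t arbitrary: u rule: ktree.induct)
  case (Star i \<sigma>)
  show ?case
  proof (cases i)
    case 0 then show ?thesis using Star.prems by simp
  next
    case (Suc j)
    then obtain t where t: "t \<in># \<sigma>" "u \<in> set_ktree (unpi t)" using Star.prems by auto
    then have "sz u \<le> sz t" using Star.IH by blast
    then show ?thesis using sz_mem[OF t(1), of i] by simp
  qed
qed simp

lemma pi_tcar: "s \<in> tcar n (car (TmO (Suc n) X)) \<Longrightarrow> pi s \<in> tcar (Suc n) (car X)"
  by (induction rule: tcar.induct) (auto simp: car_TmO_low)

lemma low_up: "low w \<Longrightarrow> t \<in># ts \<Longrightarrow> tle le w t \<Longrightarrow> tle le w (Star k ts)"
  by (cases w) auto

lemma low_down: "low w \<Longrightarrow> tle le w (Star (Suc j) ts) \<Longrightarrow> \<exists>t\<in>#ts. tle le w t"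
  by (cases w) auto

lemma LA: "u \<in> set_ktree s \<Longrightarrow> low w \<Longrightarrow> tle le w u \<Longrightarrow> tle le w (pi s)"
proof (induction s rule: ktree.induct)
  case (Bar x)
  then show ?case by simp
next
  case (Star i \<sigma>)
  then obtain t where t: "t \<in># \<sigma>" "u \<in> set_ktree t" by auto
  then have "tle le w (pi t)" using Star by blast
  then show ?case using low_up[OF Star.prems(2), of "pi t" "image_mset pi \<sigma>"] t(1) by simp
qed

lemma LC: "low w \<Longrightarrow> tle le w (pi s) \<Longrightarrow> \<exists>u\<in>set_ktree s. tle le w u"
proof (induction s rule: ktree.induct)
  case (Bar x)
  then show ?case by simp
next
  case (Star i \<sigma>)
  then obtain t where t: "t \<in># image_mset pi \<sigma>" "tle le w t" using low_down[OF Star.prems(1)] by fastforce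
  then obtain s where s: "s \<in># \<sigma>" "t = pi s" by auto
  then obtain u where "u \<in> set_ktree s" "tle le w u" using Star.IH t(2) Star.prems(1) by blast
  then show ?case using s(1) by auto
qed

lemma LD:
  assumes "b \<in> tcar n (car (TmO (Suc n) X))"
  shows "a \<in> tcar n (car (TmO (Suc n) X)) \<Longrightarrow> tle (tle (leq X)) a b \<longleftrightarrow> tle (leq X) (pi a) (pi b)"
  using assms
proof (induction b arbitrary: a rule: ktree.induct)
  case (Bar v)
  show ?case
  proof (cases a)
    case (Bar u)
    then show ?thesis by simp
  next
    case (Star i \<sigma>)
    have "low v" using Bar.prems(2) by (simp add: car_TmO_low)
    then have "\<not> tle (leq X) (pi a) (pi (Bar v))" using Star by (cases v) simp_all
    moreover have "\<not> tle (tle (leq X)) a (Bar v)" using Star by simp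
    ultimately show ?thesis by blast
  qed
next
  case (Star j \<tau>)
  have IH: "\<And>t a. t \<in># \<tau> \<Longrightarrow> a \<in> tcar n (car (TmO (Suc n) X)) \<Longrightarrow>
      tle (tle (leq X)) a t \<longleftrightarrow> tle (leq X) (pi a) (pi t)"
  proof -
    fix t a assume "t \<in># \<tau>" "a \<in> tcar n (car (TmO (Suc n) X))"
    moreover have "t \<in> tcar n (car (TmO (Suc n) X))" using Star.prems(2) \<open>t \<in># \<tau>\<close> by simp
    ultimately show "tle (tle (leq X)) a t \<longleftrightarrow> tle (leq X) (pi a) (pi t)" using Star.IH by blast
  qed
  show ?case
  proof (cases a)
    case (Bar u)
    have lu: "low u" using Star.prems(1) Bar by (simp add: car_TmO_low)
    have s1: "tle (tle (leq X)) a (Star j \<tau>) \<longleftrightarrow> (\<exists>t\<in>#\<tau>. tle (tle (leq X)) a t)" using Bar by simp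
    have s2: "(\<exists>t\<in>#\<tau>. tle (tle (leq X)) a t) \<longleftrightarrow> (\<exists>t\<in>#\<tau>. tle (leq X) u (pi t))"
    proof -
      have "\<And>t. t \<in># \<tau> \<Longrightarrow> tle (tle (leq X)) a t \<longleftrightarrow> tle (leq X) u (pi t)"
        using IH[OF _ Star.prems(1)] Bar by simp
      then show ?thesis by blast
    qed
    have s3: "(\<exists>t\<in>#\<tau>. tle (leq X) u (pi t)) \<longleftrightarrow> tle (leq X) u (Star (Suc j) (image_mset pi \<tau>))"
    proof
      assume "\<exists>t\<in>#\<tau>. tle (leq X) u (pi t)"
      then obtain t where "t \<in># \<tau>" "tle (leq X) u (pi t)" by blast
      then show "tle (leq X) u (Star (Suc j) (image_mset pi \<tau>))"
        using low_up[OF lu, of "pi t" "image_mset pi \<tau>"] by simp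
    next
      assume "tle (leq X) u (Star (Suc j) (image_mset pi \<tau>))"
      from low_down[OF lu this] show "\<exists>t\<in>#\<tau>. tle (leq X) u (pi t)" by simp
    qed
    show ?thesis using s1 s2 s3 Bar by simp
  next
    case (Star i \<sigma>)
    have sig: "\<forall>s\<in>#\<sigma>. s \<in> tcar n (car (TmO (Suc n) X))" using Star.prems(1) Star by simp
    have IH2: "\<forall>a\<in>#\<sigma>. \<forall>b\<in>#\<tau>. tle (tle (leq X)) a b \<longleftrightarrow> tle (leq X) (pi a) (pi b)"
      using IH sig by blast
    have e1: "mi (tle (tle (leq X))) \<sigma> \<tau> \<longleftrightarrow> mi (tle (leq X)) (image_mset pi \<sigma>) (image_mset pi \<tau>)"
    proof
      assume h: "mi (tle (tle (leq X))) \<sigma> \<tau>"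
      have "mi (\<lambda>a b. tle (leq X) (pi a) (pi b)) \<sigma> \<tau>"
      proof (rule mi_mono[OF h])
        show "\<forall>a\<in>#\<sigma>. \<forall>b\<in>#\<tau>. tle (tle (leq X)) a b \<longrightarrow> tle (leq X) (pi a) (pi b)"
          using IH2 by blast
      qed
      then show "mi (tle (leq X)) (image_mset pi \<sigma>) (image_mset pi \<tau>)" using mi_image by blast
    next
      assume "mi (tle (leq X)) (image_mset pi \<sigma>) (image_mset pi \<tau>)"
      then have h: "mi (\<lambda>a b. tle (leq X) (pi a) (pi b)) \<sigma> \<tau>" using mi_image by blast
      show "mi (tle (tle (leq X))) \<sigma> \<tau>"
        using mi_mono[OF h] IH2 by blast
    qed
    have e2: "(\<exists>t\<in>#\<tau>. tle (tle (leq X)) a t) \<longleftrightarrow> (\<exists>t\<in>#\<tau>. tle (leq X) (pi a) (pi t))"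
      using IH[OF _ Star.prems(1)] by blast
    have l: "tle (tle (leq X)) a (Star j \<tau>) \<longleftrightarrow> (i = j \<and> mi (tle (tle (leq X))) \<sigma> \<tau>) \<or> (i \<le> j \<and> (\<exists>t\<in>#\<tau>. tle (tle (leq X)) a t))"
      using Star by simp
    have r: "tle (leq X) (pi a) (pi (Star j \<tau>)) \<longleftrightarrow> (i = j \<and> mi (tle (leq X)) (image_mset pi \<sigma>) (image_mset pi \<tau>)) \<or> (i \<le> j \<and> (\<exists>t\<in>#\<tau>. tle (leq X) (pi a) (pi t)))"
      using Star by simp
    show ?thesis using l r e1 e2 by blast
  qed
qed


lemma kappa_low: "low (kappa \<sigma>)" by (simp add: kappa_def)

lemma leq_TmO': "leq (TmO (Suc n) X) = tle (leq X)" by (rule leq_TmO)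

lemma LAC: "low w \<Longrightarrow> (\<exists>s\<in>#\<tau>. tle le w (pi s)) \<longleftrightarrow> (\<exists>s\<in>#\<tau>. \<exists>u\<in>set_ktree s. tle le w u)"
  using LA LC by metis

lemma kfp_T:
  assumes po: "is_po X"
  shows "kfp (WO n) (WS n) X (TmO (Suc n) X) iota kappa"
proof -
  let ?Z = "TmO (Suc n) X"
  have cW: "car (WO n ?Z) = {\<sigma>. set_mset \<sigma> \<subseteq> tcar n (car ?Z)}" by (rule car_WO)
  have lW: "leq (WO n ?Z) = mi (tle (tle (leq X)))" by (simp add: leq_WO leq_TmO)
  have lZ: "leq ?Z = tle (leq X)" by (rule leq_TmO)
  have 1: "is_po ?Z" using is_po_TmO[OF po] .
  have 2: "\<forall>x\<in>car X. iota x \<in> car ?Z" by (simp add: iota_def car_TmO_low)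
  have 3: "\<forall>\<sigma>\<in>car (WO n ?Z). kappa \<sigma> \<in> car ?Z"
  proof
    fix \<sigma> assume "\<sigma> \<in> car (WO n ?Z)"
    then have "\<forall>s\<in>#\<sigma>. s \<in> tcar n (car ?Z)" unfolding cW by blast
    then have "\<forall>t\<in>#image_mset pi \<sigma>. t \<in> tcar (Suc n) (car X)" using pi_tcar[of _ n X] by auto
    then show "kappa \<sigma> \<in> car ?Z" by (simp add: kappa_def car_TmO_low)
  qed
  have 4: "iota ` car X \<inter> kappa ` car (WO n ?Z) = {}" by (auto simp: iota_def kappa_def)
  have 5: "\<forall>x\<in>car X. \<forall>y\<in>car X. leq ?Z (iota x) (iota y) \<longrightarrow> leq X x y"
    by (simp add: lZ iota_def)
  have 6: "\<forall>x\<in>car X. \<forall>\<tau>\<in>car (WO n ?Z). leq ?Z (iota x) (kappa \<tau>) \<longleftrightarrow> fin_le (leq ?Z) {iota x} (WS n ?Z \<tau>)"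
  proof (intro ballI)
    fix x \<tau>
    have "leq ?Z (iota x) (kappa \<tau>) \<longleftrightarrow> (\<exists>s\<in>#\<tau>. tle (leq X) (Bar x) (pi s))"
      by (simp add: lZ iota_def kappa_def)
    also have "\<dots> \<longleftrightarrow> (\<exists>s\<in>#\<tau>. \<exists>u\<in>set_ktree s. tle (leq X) (Bar x) u)"
      by (rule LAC) simp
    also have "\<dots> \<longleftrightarrow> fin_le (leq ?Z) {iota x} (WS n ?Z \<tau>)"
      by (auto simp: fin_le_def WS_eq lZ iota_def)
    finally show "leq ?Z (iota x) (kappa \<tau>) \<longleftrightarrow> fin_le (leq ?Z) {iota x} (WS n ?Z \<tau>)" .
  qed
  have 7: "\<forall>\<sigma>\<in>car (WO n ?Z). \<forall>y\<in>car X. \<not> leq ?Z (kappa \<sigma>) (iota y)"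
    by (simp add: lZ iota_def kappa_def)
  have 8: "\<forall>\<sigma>\<in>car (WO n ?Z). \<forall>\<tau>\<in>car (WO n ?Z). leq ?Z (kappa \<sigma>) (kappa \<tau>) \<longleftrightarrow>
        (leq (WO n ?Z) \<sigma> \<tau> \<or> fin_le (leq ?Z) {kappa \<sigma>} (WS n ?Z \<tau>))"
  proof (intro ballI)
    fix \<sigma> \<tau> assume s: "\<sigma> \<in> car (WO n ?Z)" and t: "\<tau> \<in> car (WO n ?Z)"
    have sm: "\<forall>a\<in>#\<sigma>. a \<in> tcar n (car ?Z)" and tm: "\<forall>b\<in>#\<tau>. b \<in> tcar n (car ?Z)"
      using s t unfolding cW by blast+
    have LDs: "\<forall>a\<in>#\<sigma>. \<forall>b\<in>#\<tau>. tle (tle (leq X)) a b \<longleftrightarrow> tle (leq X) (pi a) (pi b)"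
      using LD sm tm by blast
    have e1: "mi (tle (leq X)) (image_mset pi \<sigma>) (image_mset pi \<tau>) \<longleftrightarrow> mi (tle (tle (leq X))) \<sigma> \<tau>"
    proof
      assume "mi (tle (leq X)) (image_mset pi \<sigma>) (image_mset pi \<tau>)"
      then have h: "mi (\<lambda>a b. tle (leq X) (pi a) (pi b)) \<sigma> \<tau>" using mi_image by blast
      show "mi (tle (tle (leq X))) \<sigma> \<tau>"
      proof (rule mi_mono[OF h])
        show "\<forall>a\<in>#\<sigma>. \<forall>b\<in>#\<tau>. tle (leq X) (pi a) (pi b) \<longrightarrow> tle (tle (leq X)) a b" using LDs by blast
      qed
    next
      assume h: "mi (tle (tle (leq X))) \<sigma> \<tau>"
      have "mi (\<lambda>a b. tle (leq X) (pi a) (pi b)) \<sigma> \<tau>"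
      proof (rule mi_mono[OF h])
        show "\<forall>a\<in>#\<sigma>. \<forall>b\<in>#\<tau>. tle (tle (leq X)) a b \<longrightarrow> tle (leq X) (pi a) (pi b)" using LDs by blast
      qed
      then show "mi (tle (leq X)) (image_mset pi \<sigma>) (image_mset pi \<tau>)" using mi_image by blast
    qed
    have e2: "(\<exists>t\<in>#image_mset pi \<tau>. tle (leq X) (kappa \<sigma>) t) \<longleftrightarrow> fin_le (leq ?Z) {kappa \<sigma>} (WS n ?Z \<tau>)"
    proof -
      have "(\<exists>t\<in>#image_mset pi \<tau>. tle (leq X) (kappa \<sigma>) t) \<longleftrightarrow> (\<exists>s\<in>#\<tau>. tle (leq X) (kappa \<sigma>) (pi s))"
        by simp
      also have "\<dots> \<longleftrightarrow> (\<exists>s\<in>#\<tau>. \<exists>u\<in>set_ktree s. tle (leq X) (kappa \<sigma>) u)"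
        by (rule LAC[OF kappa_low])
      also have "\<dots> \<longleftrightarrow> fin_le (leq ?Z) {kappa \<sigma>} (WS n ?Z \<tau>)"
        by (auto simp: fin_le_def WS_eq lZ)
      finally show ?thesis .
    qed
    have "leq ?Z (kappa \<sigma>) (kappa \<tau>) \<longleftrightarrow>
       mi (tle (leq X)) (image_mset pi \<sigma>) (image_mset pi \<tau>) \<or> (\<exists>t\<in>#image_mset pi \<tau>. tle (leq X) (kappa \<sigma>) t)"
      unfolding lZ by (simp add: kappa_def)
    then show "leq ?Z (kappa \<sigma>) (kappa \<tau>) \<longleftrightarrow> (leq (WO n ?Z) \<sigma> \<tau> \<or> fin_le (leq ?Z) {kappa \<sigma>} (WS n ?Z \<tau>))"
      unfolding lW using e1 e2 by blast
  qed
  show ?thesis unfolding kfp_def using 1 2 3 4 5 6 7 8 by blast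
qed


primrec Hh :: "('a \<Rightarrow> 'y) \<Rightarrow> ('y ktree multiset \<Rightarrow> 'y) \<Rightarrow> 'a ktree \<Rightarrow> 'y ktree" where
  "Hh i k (Bar x) = Bar (i x)"
| "Hh i k (Star j \<sigma>) = (if j = 0 then Bar (k (image_mset (Hh i k) \<sigma>)) else Star (j - 1) (image_mset (Hh i k) \<sigma>))"

definition Ff :: "('a \<Rightarrow> 'y) \<Rightarrow> ('y ktree multiset \<Rightarrow> 'y) \<Rightarrow> 'a ktree \<Rightarrow> 'y" where
  "Ff i k t = (case Hh i k t of Bar z \<Rightarrow> z | Star _ _ \<Rightarrow> undefined)"

lemma Ff_Bar[simp]: "Ff i k (Bar x) = i x" by (simp add: Ff_def)
lemma Ff_Star0[simp]: "Ff i k (Star 0 \<sigma>) = k (image_mset (Hh i k) \<sigma>)" by (simp add: Ff_def)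

lemma H_low: "low t \<Longrightarrow> Hh i k t = Bar (Ff i k t)"
  by (cases t) (auto simp: Ff_def)

lemma H_unpi: "Hh i k t = map_ktree (Ff i k) (unpi t)"
proof (induction t rule: ktree.induct)
  case (Star j \<sigma>)
  show ?case
  proof (cases j)
    case (Suc j')
    have "image_mset (Hh i k) \<sigma> = image_mset (map_ktree (Ff i k) \<circ> unpi) \<sigma>"
      by (rule multiset.map_cong0) (use Star in simp)
    then show ?thesis using Suc by (simp add: image_mset.compositionality)
  qed simp
qed simp

lemma H_pi: "s \<in> tcar n (car (TmO (Suc n) X)) \<Longrightarrow> Hh i k (pi s) = map_ktree (Ff i k) s"
proof (induction rule: tcar.induct)
  case (bar x)
  then have "low x" by (simp add: car_TmO_low)
  then show ?case using H_low[of x i k] by simp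
next
  case (star j \<sigma>)
  have "image_mset (Hh i k) (image_mset pi \<sigma>) = image_mset (map_ktree (Ff i k)) \<sigma>"
    unfolding image_mset.compositionality by (rule multiset.map_cong0) (use star in simp)
  then show ?case by simp
qed

lemma H_tcar:
  assumes k: "kfp (WO n) (WS n) X Z' i k"
  shows "t \<in> tcar (Suc n) (car X) \<Longrightarrow> Hh i k t \<in> tcar n (car Z') \<and> (low t \<longrightarrow> Ff i k t \<in> car Z')"
proof (induction rule: tcar.induct)
  case (bar x)
  then have "i x \<in> car Z'" using k unfolding kfp_def by blast
  then show ?case by simp
next
  case (star j \<sigma>)
  have im: "image_mset (Hh i k) \<sigma> \<in> car (WO n Z')" using star unfolding car_WO by auto
  show ?case
  proof (cases j)
    case 0
    have "k (image_mset (Hh i k) \<sigma>) \<in> car Z'" using k im unfolding kfp_def by blast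
    then show ?thesis using 0 by simp
  next
    case (Suc j')
    then show ?thesis using star by auto
  qed
qed

lemma set_H:
  assumes "t \<in> tcar (Suc n) (car X)" "z \<in> set_ktree (Hh i k t)"
  shows "\<exists>u\<in>set_ktree (unpi t). z = Ff i k u \<and> low u \<and> u \<in> tcar (Suc n) (car X) \<and> sz u \<le> sz t"
proof -
  from assms(2) obtain u where u: "u \<in> set_ktree (unpi t)" "z = Ff i k u"
    unfolding H_unpi ktree.set_map by blast
  have "u \<in> car (TmO (Suc n) X)" using set_ktree_tcar[OF unpi_tcar[OF assms(1)]] u(1) by blast
  then show ?thesis using u sz_unpi[OF u(1)] by (auto simp: car_TmO_low)
qed

lemma LA': "u \<in> set_ktree (unpi t) \<Longrightarrow> low w \<Longrightarrow> tle le w u \<Longrightarrow> tle le w t"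
  using LA[of u "unpi t" w le] by (simp add: pi_unpi)


lemma not_low: "\<not> low s \<Longrightarrow> \<exists>i \<sigma>. s = Star (Suc i) \<sigma>"
proof (cases s)
  case (Star j \<sigma>)
  assume "\<not> low s"
  then have "j \<noteq> 0" using Star by simp
  then obtain i where "j = Suc i" using not0_implies_Suc by blast
  then show ?thesis using Star by blast
qed simp

lemma Q:
  assumes k: "kfp (WO n) (WS n) X Z' i k"
  shows "s \<in> tcar (Suc n) (car X) \<Longrightarrow> s' \<in> tcar (Suc n) (car X) \<Longrightarrow>
     tle (leq Z') (Hh i k s) (Hh i k s') \<Longrightarrow> tle (leq X) s s'"
proof (induction "sz s + sz s'" arbitrary: s s' rule: less_induct)
  case less
  have IH: "\<And>a b. sz a + sz b < sz s + sz s' \<Longrightarrow> a \<in> tcar (Suc n) (car X) \<Longrightarrow> b \<in> tcar (Suc n) (car X) \<Longrightarrow>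
      tle (leq Z') (Hh i k a) (Hh i k b) \<Longrightarrow> tle (leq X) a b"
    using less.hyps by blast
  have kII: "\<forall>x\<in>car X. \<forall>y\<in>car X. leq Z' (i x) (i y) \<longrightarrow> leq X x y"
    and kIK: "\<forall>x\<in>car X. \<forall>\<tau>\<in>car (WO n Z'). leq Z' (i x) (k \<tau>) \<longleftrightarrow> fin_le (leq Z') {i x} (WS n Z' \<tau>)"
    and kKI: "\<forall>\<sigma>\<in>car (WO n Z'). \<forall>y\<in>car X. \<not> leq Z' (k \<sigma>) (i y)"
    and kKK: "\<forall>\<sigma>\<in>car (WO n Z'). \<forall>\<tau>\<in>car (WO n Z'). leq Z' (k \<sigma>) (k \<tau>) \<longleftrightarrow>
        (leq (WO n Z') \<sigma> \<tau> \<or> fin_le (leq Z') {k \<sigma>} (WS n Z' \<tau>))"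
    using k unfolding kfp_def by blast+
  have Hc: "\<And>t. t \<in> tcar (Suc n) (car X) \<Longrightarrow> Hh i k t \<in> tcar n (car Z')"
    using H_tcar[OF k] by blast
  have imH: "\<And>\<sigma>. \<forall>t\<in>#\<sigma>. t \<in> tcar (Suc n) (car X) \<Longrightarrow> image_mset (Hh i k) \<sigma> \<in> car (WO n Z')"
    using Hc unfolding car_WO by auto
  have mi_case: "\<And>\<sigma> \<tau> j. s = Star j \<sigma> \<Longrightarrow> s' = Star j \<tau> \<Longrightarrow>
      mi (tle (leq Z')) (image_mset (Hh i k) \<sigma>) (image_mset (Hh i k) \<tau>) \<Longrightarrow> tle (leq X) s s'"
  proof -
    fix \<sigma> \<tau> j assume s: "s = Star j \<sigma>" and s': "s' = Star j \<tau>"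
      and h: "mi (tle (leq Z')) (image_mset (Hh i k) \<sigma>) (image_mset (Hh i k) \<tau>)"
    have h2: "mi (\<lambda>a b. tle (leq Z') (Hh i k a) (Hh i k b)) \<sigma> \<tau>" using h mi_image by blast
    have "mi (tle (leq X)) \<sigma> \<tau>"
    proof (rule mi_mono[OF h2])
      show "\<forall>a\<in>#\<sigma>. \<forall>b\<in>#\<tau>. tle (leq Z') (Hh i k a) (Hh i k b) \<longrightarrow> tle (leq X) a b"
      proof (intro ballI impI)
        fix a b assume a: "a \<in># \<sigma>" and b: "b \<in># \<tau>" and ab: "tle (leq Z') (Hh i k a) (Hh i k b)"
        have "sz a < sz s" using sz_mem[OF a] s by simp
        moreover have "sz b < sz s'" using sz_mem[OF b] s' by simp
        moreover have "a \<in> tcar (Suc n) (car X)" "b \<in> tcar (Suc n) (car X)" using less.prems a b s s' by auto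
        ultimately show "tle (leq X) a b" using IH ab by simp
      qed
    qed
    then show "tle (leq X) s s'" using s s' by simp
  qed
  have fin_case: "\<And>\<tau>. low s \<Longrightarrow> s' = Star 0 \<tau> \<Longrightarrow>
      (\<exists>t'\<in>#\<tau>. \<exists>z\<in>set_ktree (Hh i k t'). leq Z' (Ff i k s) z) \<Longrightarrow> tle (leq X) s s'"
  proof -
    fix \<tau> assume ls: "low s" and s': "s' = Star 0 \<tau>" and "\<exists>t'\<in>#\<tau>. \<exists>z\<in>set_ktree (Hh i k t'). leq Z' (Ff i k s) z"
    then obtain t' z where t': "t' \<in># \<tau>" "z \<in> set_ktree (Hh i k t')" "leq Z' (Ff i k s) z" by blast
    have t'c: "t' \<in> tcar (Suc n) (car X)" using less.prems(2) s' t'(1) by simp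
    from set_H[OF t'c t'(2)] obtain u where u: "u \<in> set_ktree (unpi t')" "z = Ff i k u" "low u"
      "u \<in> tcar (Suc n) (car X)" "sz u \<le> sz t'" by blast
    have "sz u < sz s'" using u(5) sz_mem[OF t'(1), of 0] s' by simp
    moreover have "tle (leq Z') (Hh i k s) (Hh i k u)" using H_low[OF ls, of i k] H_low[OF u(3), of i k] t'(3) u(2) by simp
    ultimately have "tle (leq X) s u" using IH less.prems(1) u(4) by simp
    then have "tle (leq X) s t'" using LA'[OF u(1) ls] by simp
    then show "tle (leq X) s s'" using low_up[OF ls t'(1)] s' by simp
  qed
  have WSH: "\<And>\<tau> w. fin_le (leq Z') {w} (WS n Z' (image_mset (Hh i k) \<tau>)) \<longleftrightarrow>
      (\<exists>t'\<in>#\<tau>. \<exists>z\<in>set_ktree (Hh i k t'). leq Z' w z)"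
    by (auto simp: fin_le_def WS_eq)
  consider (LL) "low s" "low s'" | (NL) "\<not> low s" "low s'" | (LN) "low s" "\<not> low s'" | (NN) "\<not> low s" "\<not> low s'"
    by blast
  then show ?case
  proof cases
    case LL
    have FF: "leq Z' (Ff i k s) (Ff i k s')" using less.prems(3) H_low[OF LL(1), of i k] H_low[OF LL(2), of i k] by simp
    from LL(1) obtain x \<sigma> where sc: "s = Bar x \<or> s = Star 0 \<sigma>" by (cases s) auto
    from LL(2) obtain y \<tau> where sc': "s' = Bar y \<or> s' = Star 0 \<tau>" by (cases s') auto
    show ?thesis
    proof (cases "s' = Bar y")
      case s'B: True
      show ?thesis
      proof (cases "s = Bar x")
        case True
        then show ?thesis using FF s'B kII less.prems by simp
      next
        case False
        then have s: "s = Star 0 \<sigma>" using sc by blast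
        have "image_mset (Hh i k) \<sigma> \<in> car (WO n Z')" using imH less.prems(1) s by simp
        then have False using FF s s'B kKI less.prems(2) by simp
        then show ?thesis ..
      qed
    next
      case False
      then have s': "s' = Star 0 \<tau>" using sc' by blast
      have imt: "image_mset (Hh i k) \<tau> \<in> car (WO n Z')" using imH less.prems(2) s' by simp
      show ?thesis
      proof (cases "s = Bar x")
        case True
        have xc: "x \<in> car X" using less.prems(1) True by simp
        have "fin_le (leq Z') {i x} (WS n Z' (image_mset (Hh i k) \<tau>))"
          using kIK xc imt FF True s' by simp
        then show ?thesis using fin_case[OF LL(1) s'] WSH True by simp
      next
        case False
        then have s: "s = Star 0 \<sigma>" using sc by blast
        have ims: "image_mset (Hh i k) \<sigma> \<in> car (WO n Z')" using imH less.prems(1) s by simp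
        have "leq (WO n Z') (image_mset (Hh i k) \<sigma>) (image_mset (Hh i k) \<tau>) \<or>
              fin_le (leq Z') {k (image_mset (Hh i k) \<sigma>)} (WS n Z' (image_mset (Hh i k) \<tau>))"
          using kKK ims imt FF s s' by simp
        then show ?thesis
        proof
          assume "leq (WO n Z') (image_mset (Hh i k) \<sigma>) (image_mset (Hh i k) \<tau>)"
          then show ?thesis using mi_case[OF s s'] by (simp add: leq_WO)
        next
          assume "fin_le (leq Z') {k (image_mset (Hh i k) \<sigma>)} (WS n Z' (image_mset (Hh i k) \<tau>))"
          then show ?thesis using fin_case[OF LL(1) s'] WSH s by simp
        qed
      qed
    qed
  next
    case NL
    then obtain i' \<sigma> where s: "s = Star (Suc i') \<sigma>" using not_low by blast
    then have False using less.prems(3) H_low[OF NL(2), of i k] by simp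
    then show ?thesis ..
  next
    case LN
    then obtain j \<tau> where s': "s' = Star (Suc j) \<tau>" using not_low by blast
    have "tle (leq Z') (Bar (Ff i k s)) (Star j (image_mset (Hh i k) \<tau>))"
      using less.prems(3) H_low[OF LN(1), of i k] s' by simp
    then obtain t' where t': "t' \<in># \<tau>" "tle (leq Z') (Hh i k s) (Hh i k t')"
      using H_low[OF LN(1), of i k] by auto
    have "sz t' < sz s'" using sz_mem[OF t'(1)] s' by simp
    then have "tle (leq X) s t'" using IH less.prems s' t' by simp
    then show ?thesis using low_up[OF LN(1) t'(1)] s' by simp
  next
    case NN
    obtain i' \<sigma> where s: "s = Star (Suc i') \<sigma>" using NN(1) not_low by blast
    obtain j \<tau> where s': "s' = Star (Suc j) \<tau>" using NN(2) not_low by blast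
    have "tle (leq Z') (Star i' (image_mset (Hh i k) \<sigma>)) (Star j (image_mset (Hh i k) \<tau>))"
      using less.prems(3) s s' by simp
    then have "(i' = j \<and> mi (tle (leq Z')) (image_mset (Hh i k) \<sigma>) (image_mset (Hh i k) \<tau>)) \<or>
       (i' \<le> j \<and> (\<exists>t\<in>#image_mset (Hh i k) \<tau>. tle (leq Z') (Hh i k s) t))"
      using s by simp
    then show ?thesis
    proof
      assume h: "i' = j \<and> mi (tle (leq Z')) (image_mset (Hh i k) \<sigma>) (image_mset (Hh i k) \<tau>)"
      then show ?thesis using mi_case[of "Suc i'" \<sigma> \<tau>] s s' by simp
    next
      assume h: "i' \<le> j \<and> (\<exists>t\<in>#image_mset (Hh i k) \<tau>. tle (leq Z') (Hh i k s) t)"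
      then obtain t' where t': "t' \<in># \<tau>" "tle (leq Z') (Hh i k s) (Hh i k t')" by auto
      have "sz t' < sz s'" using sz_mem[OF t'(1)] s' by simp
      then have "tle (leq X) s t'" using IH less.prems s' t' by simp
      then show ?thesis using h s s' t'(1) by auto
    qed
  qed
qed


lemma uniq:
  assumes g1: "\<forall>x\<in>car X. g (iota x) = i x"
    and g2: "\<forall>\<sigma>\<in>car (WO n (TmO (Suc n) X)). g (kappa \<sigma>) = k (WM g \<sigma>)"
  shows "z \<in> car (TmO (Suc n) X) \<Longrightarrow> g z = Ff i k z"
proof (induction "sz z" arbitrary: z rule: less_induct)
  case less
  from less.prems have lz: "low z" and zc: "z \<in> tcar (Suc n) (car X)" by (simp_all add: car_TmO_low)
  show ?case
  proof (cases z)
    case (Bar x)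
    then show ?thesis using g1 zc by (simp add: iota_def)
  next
    case (Star j \<sigma>)
    then have j: "j = 0" using lz by simp
    have sc: "\<forall>t\<in>#\<sigma>. t \<in> tcar (Suc n) (car X)" using zc Star by simp
    let ?\<rho> = "image_mset unpi \<sigma>"
    have \<rho>c: "?\<rho> \<in> car (WO n (TmO (Suc n) X))" unfolding car_WO using sc unpi_tcar[of _ n X] by auto
    have kz: "kappa ?\<rho> = z" using Star j
      by (simp add: kappa_def image_mset.compositionality comp_def pi_unpi)
    have "g z = k (WM g ?\<rho>)" using g2 \<rho>c kz by metis
    also have "WM g ?\<rho> = image_mset (map_ktree g \<circ> unpi) \<sigma>"
      by (simp add: WM_eq image_mset.compositionality)
    also have "\<dots> = image_mset (map_ktree (Ff i k) \<circ> unpi) \<sigma>"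
    proof (rule multiset.map_cong0)
      fix t assume t: "t \<in> set_mset \<sigma>"
      have "map_ktree g (unpi t) = map_ktree (Ff i k) (unpi t)"
      proof (rule ktree.map_cong0)
        fix u assume u: "u \<in> set_ktree (unpi t)"
        have "u \<in> car (TmO (Suc n) X)" using set_ktree_tcar[OF unpi_tcar[of t n X]] sc t u by auto
        moreover have "sz u < sz z" using sz_unpi[OF u] sz_mem[of t \<sigma> j] t Star by simp
        ultimately show "g u = Ff i k u" using less.hyps by blast
      qed
      then show "(map_ktree g \<circ> unpi) t = (map_ktree (Ff i k) \<circ> unpi) t" by simp
    qed
    also have "\<dots> = image_mset (Hh i k) \<sigma>"
      by (rule multiset.map_cong0) (simp add: H_unpi)
    finally show ?thesis using Star j by simp
  qed
qed

lemma initial_T: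
  assumes po: "is_po X"
  shows "initial_kfp (WO n) (WS n) (WO n :: 'y po \<Rightarrow> _) (WS n) WM X (TmO (Suc n) X) iota kappa"
  unfolding initial_kfp_def
proof (intro conjI allI impI)
  show "kfp (WO n) (WS n) X (TmO (Suc n) X) iota kappa" using kfp_T[OF po] .
next
  fix Z' :: "'y po" and i k
  assume k: "kfp (WO n) (WS n) X Z' i k"
  let ?F = "Ff i k"
  have 1: "qemb ?F (TmO (Suc n) X) Z'"
    unfolding qemb_def
  proof (intro conjI ballI impI)
    fix z assume "z \<in> car (TmO (Suc n) X)"
    then show "?F z \<in> car Z'" using H_tcar[OF k] by (simp add: car_TmO_low)
  next
    fix z z' assume z: "z \<in> car (TmO (Suc n) X)" and z': "z' \<in> car (TmO (Suc n) X)"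
      and h: "leq Z' (?F z) (?F z')"
    have lz: "low z" "z \<in> tcar (Suc n) (car X)" using z by (simp_all add: car_TmO_low)
    have lz': "low z'" "z' \<in> tcar (Suc n) (car X)" using z' by (simp_all add: car_TmO_low)
    have "tle (leq Z') (Hh i k z) (Hh i k z')" using h H_low[OF lz(1), of i k] H_low[OF lz'(1), of i k] by simp
    then have "tle (leq X) z z'" using Q[OF k lz(2) lz'(2)] by simp
    then show "leq (TmO (Suc n) X) z z'" by (simp add: leq_TmO)
  qed
  have 2: "\<forall>x\<in>car X. ?F (iota x) = i x" by (simp add: iota_def)
  have 3: "\<forall>\<sigma>\<in>car (WO n (TmO (Suc n) X)). ?F (kappa \<sigma>) = k (WM ?F \<sigma>)"
  proof
    fix \<sigma> assume s: "\<sigma> \<in> car (WO n (TmO (Suc n) X))"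
    have "image_mset (Hh i k) (image_mset pi \<sigma>) = image_mset (map_ktree ?F) \<sigma>"
      unfolding image_mset.compositionality
    proof (rule multiset.map_cong0)
      fix t assume "t \<in> set_mset \<sigma>"
      then have "t \<in> tcar n (car (TmO (Suc n) X))" using s unfolding car_WO by blast
      then show "(Hh i k \<circ> pi) t = map_ktree ?F t" using H_pi by simp
    qed
    then show "?F (kappa \<sigma>) = k (WM ?F \<sigma>)" by (simp add: kappa_def WM_eq)
  qed
  have 4: "\<forall>g. qemb g (TmO (Suc n) X) Z' \<and> (\<forall>x\<in>car X. g (iota x) = i x) \<and>
      (\<forall>\<sigma>\<in>car (WO n (TmO (Suc n) X)). g (kappa \<sigma>) = k (WM g \<sigma>)) \<longrightarrow>
      (\<forall>z\<in>car (TmO (Suc n) X). g z = ?F z)"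
    using uniq by blast
  show "\<exists>f. qemb f (TmO (Suc n) X) Z' \<and> (\<forall>x\<in>car X. f (iota x) = i x) \<and>
             (\<forall>\<sigma>\<in>car (WO n (TmO (Suc n) X)). f (kappa \<sigma>) = k (WM f \<sigma>)) \<and>
             (\<forall>g. qemb g (TmO (Suc n) X) Z' \<and> (\<forall>x\<in>car X. g (iota x) = i x) \<and>
                  (\<forall>\<sigma>\<in>car (WO n (TmO (Suc n) X)). g (kappa \<sigma>) = k (WM g \<sigma>)) \<longrightarrow>
                  (\<forall>z\<in>car (TmO (Suc n) X). g z = f z))"
    using 1 2 3 4 by blast
qed

lemma pi_map: "map_ktree f (pi s) = pi (map_ktree (map_ktree f) s)"
proof (induction s rule: ktree.induct)
  case (Star i \<sigma>)
  have "image_mset (map_ktree f \<circ> pi) \<sigma> = image_mset (pi \<circ> map_ktree (map_ktree f)) \<sigma>"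
    by (rule multiset.map_cong0) (use Star in simp)
  then show ?case by (simp add: image_mset.compositionality)
qed simp

lemma natural:
  "(\<forall>x\<in>car X. iota (f x) = map_ktree f (iota x)) \<and>
   (\<forall>\<sigma>\<in>car (WO n (TmO (Suc n) X)). map_ktree f (kappa \<sigma>) = kappa (WM (map_ktree f) \<sigma>))"
  by (simp add: iota_def kappa_def WM_eq image_mset.compositionality comp_def pi_map)


theorem theorem6p5:
  fixes n :: nat
  shows
   \<comment> \<open>\<open>M \<circ> T_n\<close> is a normal PO-dilator\<close>
   "po_dilator (WO n :: 'a po \<Rightarrow> _) (WS n) (WO n :: 'b po \<Rightarrow> _) (WS n)
      (WM :: ('a \<Rightarrow> 'a) \<Rightarrow> _) (WM :: ('a \<Rightarrow> 'b) \<Rightarrow> _) (WM :: ('b \<Rightarrow> 'c) \<Rightarrow> _) (WM :: ('a \<Rightarrow> 'c) \<Rightarrow> _)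
    \<and> normal (WO n :: 'a po \<Rightarrow> _) (WS n)
   \<comment> \<open>\<open>T_{n+1}^-\<close> is a normal PO-dilator\<close>
    \<and> po_dilator (TmO (Suc n) :: 'a po \<Rightarrow> _) TmS (TmO (Suc n) :: 'b po \<Rightarrow> _) TmS
      (map_ktree :: ('a \<Rightarrow> 'a) \<Rightarrow> _) (map_ktree :: ('a \<Rightarrow> 'b) \<Rightarrow> _)
      (map_ktree :: ('b \<Rightarrow> 'c) \<Rightarrow> _) (map_ktree :: ('a \<Rightarrow> 'c) \<Rightarrow> _)
    \<and> normal (TmO (Suc n) :: 'a po \<Rightarrow> _) TmS
   \<comment> \<open>(i) initial Kruskal fixed points\<close>
    \<and> (\<forall>X :: 'a po. is_po X \<longrightarrow>
         initial_kfp (WO n) (WS n) (WO n :: 'y po \<Rightarrow> _) (WS n) WM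
           X (TmO (Suc n) X) iota kappa)
   \<comment> \<open>(ii) naturality\<close>
    \<and> (\<forall>(X :: 'a po) (Y :: 'b po) f. is_po X \<and> is_po Y \<and> qemb f X Y \<longrightarrow>
         (\<forall>x\<in>car X. iota (f x) = map_ktree f (iota x)) \<and>
         (\<forall>\<sigma>\<in>car (WO n (TmO (Suc n) X)). map_ktree f (kappa \<sigma>) = kappa (WM (map_ktree f) \<sigma>)))"
  proof (intro conjI allI impI)
  show "po_dilator (WO n :: 'a po \<Rightarrow> _) (WS n) (WO n :: 'b po \<Rightarrow> _) (WS n)
      (WM :: ('a \<Rightarrow> 'a) \<Rightarrow> _) (WM :: ('a \<Rightarrow> 'b) \<Rightarrow> _) (WM :: ('b \<Rightarrow> 'c) \<Rightarrow> _) (WM :: ('a \<Rightarrow> 'c) \<Rightarrow> _)"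
    by (rule dil_WO)
  show "normal (WO n :: 'a po \<Rightarrow> _) (WS n)" by (rule normal_WO)
  show "po_dilator (TmO (Suc n) :: 'a po \<Rightarrow> _) TmS (TmO (Suc n) :: 'b po \<Rightarrow> _) TmS
      (map_ktree :: ('a \<Rightarrow> 'a) \<Rightarrow> _) (map_ktree :: ('a \<Rightarrow> 'b) \<Rightarrow> _)
      (map_ktree :: ('b \<Rightarrow> 'c) \<Rightarrow> _) (map_ktree :: ('a \<Rightarrow> 'c) \<Rightarrow> _)"
    by (rule dil_TmO)
  show "normal (TmO (Suc n) :: 'a po \<Rightarrow> _) TmS" by (rule normal_TmO)
next
  fix X :: "'a po" assume "is_po X"
  then show "initial_kfp (WO n) (WS n) (WO n :: 'y po \<Rightarrow> _) (WS n) WM X (TmO (Suc n) X) iota kappa"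
    by (rule initial_T)
next
  fix X :: "'a po" and Y :: "'b po" and f :: "'a \<Rightarrow> 'b"
  show "\<forall>x\<in>car X. iota (f x) = map_ktree f (iota x)" by (simp add: iota_def)
  show "\<forall>\<sigma>\<in>car (WO n (TmO (Suc n) X)). map_ktree f (kappa \<sigma>) = kappa (WM (map_ktree f) \<sigma>)"
    using natural[of X f n] by (rule conjunct2)
qed

end
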